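(* Let $\mathcal{M}$ be an $n$-abelian category, let $X^0\xrightarrow{d_X^0}X^1\to\cdots\xrightarrow{d_X^{n-1}}X^n\xrightarrow{d_X^n}X^{n+1}$ be an $n$-exact sequence, let $Y^0\xrightarrow{d_Y^0}Y^1\to\cdots\xrightarrow{d_Y^{n-1}}Y^n$ be a complex with $d_Y^0$ a monomorphism, and let $(f^0,\dots,f^n)$ be a morphism of complexes from $X^0\to\cdots\to X^n$ to $Y^0\to\cdots\to Y^n$. The following are equivalent: (i) $(f^0,\dots,f^n)$ is an $n$-pushout diagram; (ii) its mapping cone is an $n$-exact sequence; (iii) it is both an $n$-pushout and an $n$-pullback diagram; (iv) there exists a morphism $d_Y^n:Y^n\to X^{n+1}$ with $d_Y^nf^n=d_X^n$ such that $Y^0\xrightarrow{d_Y^0}\cdots\xrightarrow{d_Y^{n-1}}Y^n\xrightarrow{d_Y^n}X^{n+1}$ is an $n$-exact sequence.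
   Context: A complex $X^0\xrightarrow{d^0}\cdots\xrightarrow{d^n}X^{n+1}$ is right $n$-exact if $0\to\mathcal{M}(X^{n+1},W)\to\cdots\to\mathcal{M}(X^0,W)$ is exact for all $W$, left $n$-exact if $0\to\mathcal{M}(W,X^0)\to\cdots\to\mathcal{M}(W,X^{n+1})$ is exact for all $W$, $n$-exact if both. For a morphism of complexes $f=(f^0,\dots,f^n)$ from $X^0\xrightarrow{d_X^0}\cdots\to X^n$ to $Y^0\xrightarrow{d_Y^0}\cdots\to Y^n$, its mapping cone is $X^0\to X^1\oplus Y^0\to\cdots\to X^n\oplus Y^{n-1}\to Y^n$ with differentials $\begin{pmatrix}-d_X^k&0\\ f^k&d_Y^{k-1}\end{pmatrix}$ ($d_X^n=0$, $d_Y^{-1}=0$ in this formula); $f$ is an $n$-pushout diagram if its mapping cone is right $n$-exact and an $n$-pullback diagram if its mapping cone is left $n$-exact. An $n$-abelian category is an idempotent complete additive category in which every morphism has an $n$-kernel and an $n$-cokernel, and in which every monomorphism (resp. epimorphism) together with any of its $n$-cokernels (resp. $n$-kernels) forms an $n$-exact sequence. *)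

theory Defs
  imports Main
begin

text \<open>An additive category presented with untyped morphisms: objects of type 'o,
morphisms of type 'm, hom-sets Hom A B, composition cmp g f (= g after f),
identities, zero morphisms, addition and negation on hom-sets, and a chosen
biproduct bp A B with injections in1, in2 and projections pr1, pr2.\<close>

record ('o, 'm) addcat =
  Obj :: "'o set"
  Hom :: "'o \<Rightarrow> 'o \<Rightarrow> 'm set"
  cmp :: "'m \<Rightarrow> 'm \<Rightarrow> 'm"
  idm :: "'o \<Rightarrow> 'm"
  zer :: "'o \<Rightarrow> 'o \<Rightarrow> 'm"
  add :: "'m \<Rightarrow> 'm \<Rightarrow> 'm"
  neg :: "'m \<Rightarrow> 'm"
  bp  :: "'o \<Rightarrow> 'o \<Rightarrow> 'o"
  in1 :: "'o \<Rightarrow> 'o \<Rightarrow> 'm"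
  in2 :: "'o \<Rightarrow> 'o \<Rightarrow> 'm"
  pr1 :: "'o \<Rightarrow> 'o \<Rightarrow> 'm"
  pr2 :: "'o \<Rightarrow> 'o \<Rightarrow> 'm"

definition is_category :: "('o, 'm, 'x) addcat_scheme \<Rightarrow> bool" where
  "is_category C \<longleftrightarrow>
     (\<forall>A\<in>Obj C. \<forall>B\<in>Obj C. \<forall>D\<in>Obj C. \<forall>f\<in>Hom C A B. \<forall>g\<in>Hom C B D. cmp C g f \<in> Hom C A D) \<and>
     (\<forall>A\<in>Obj C. \<forall>B\<in>Obj C. \<forall>D\<in>Obj C. \<forall>E\<in>Obj C. \<forall>f\<in>Hom C A B. \<forall>g\<in>Hom C B D. \<forall>h\<in>Hom C D E.
        cmp C h (cmp C g f) = cmp C (cmp C h g) f) \<and>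
     (\<forall>A\<in>Obj C. idm C A \<in> Hom C A A) \<and>
     (\<forall>A\<in>Obj C. \<forall>B\<in>Obj C. \<forall>f\<in>Hom C A B. cmp C f (idm C A) = f \<and> cmp C (idm C B) f = f)"

definition is_preadditive :: "('o, 'm, 'x) addcat_scheme \<Rightarrow> bool" where
  "is_preadditive C \<longleftrightarrow> is_category C \<and>
     (\<forall>A\<in>Obj C. \<forall>B\<in>Obj C.
        zer C A B \<in> Hom C A B \<and>
        (\<forall>f\<in>Hom C A B. \<forall>g\<in>Hom C A B. add C f g \<in> Hom C A B) \<and>
        (\<forall>f\<in>Hom C A B. neg C f \<in> Hom C A B) \<and>
        (\<forall>f\<in>Hom C A B. \<forall>g\<in>Hom C A B. \<forall>h\<in>Hom C A B. add C (add C f g) h = add C f (add C g h)) \<and>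
        (\<forall>f\<in>Hom C A B. \<forall>g\<in>Hom C A B. add C f g = add C g f) \<and>
        (\<forall>f\<in>Hom C A B. add C f (zer C A B) = f) \<and>
        (\<forall>f\<in>Hom C A B. add C f (neg C f) = zer C A B)) \<and>
     (\<forall>A\<in>Obj C. \<forall>B\<in>Obj C. \<forall>D\<in>Obj C. \<forall>f\<in>Hom C A B. \<forall>f'\<in>Hom C A B. \<forall>g\<in>Hom C B D. \<forall>g'\<in>Hom C B D.
        cmp C g (add C f f') = add C (cmp C g f) (cmp C g f') \<and>
        cmp C (add C g g') f = add C (cmp C g f) (cmp C g' f))"

definition is_additive :: "('o, 'm, 'x) addcat_scheme \<Rightarrow> bool" where
  "is_additive C \<longleftrightarrow> is_preadditive C \<and>
     (\<exists>Z\<in>Obj C. \<forall>A\<in>Obj C. Hom C A Z = {zer C A Z} \<and> Hom C Z A = {zer C Z A}) \<and>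
     (\<forall>A\<in>Obj C. \<forall>B\<in>Obj C. bp C A B \<in> Obj C \<and>
        in1 C A B \<in> Hom C A (bp C A B) \<and> in2 C A B \<in> Hom C B (bp C A B) \<and>
        pr1 C A B \<in> Hom C (bp C A B) A \<and> pr2 C A B \<in> Hom C (bp C A B) B \<and>
        cmp C (pr1 C A B) (in1 C A B) = idm C A \<and>
        cmp C (pr2 C A B) (in2 C A B) = idm C B \<and>
        cmp C (pr1 C A B) (in2 C A B) = zer C B A \<and>
        cmp C (pr2 C A B) (in1 C A B) = zer C A B \<and>
        add C (cmp C (in1 C A B) (pr1 C A B)) (cmp C (in2 C A B) (pr2 C A B)) = idm C (bp C A B))"

definition is_mono :: "('o, 'm, 'x) addcat_scheme \<Rightarrow> 'o \<Rightarrow> 'o \<Rightarrow> 'm \<Rightarrow> bool" where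
  "is_mono C A B f \<longleftrightarrow> f \<in> Hom C A B \<and>
     (\<forall>W\<in>Obj C. \<forall>g\<in>Hom C W A. \<forall>h\<in>Hom C W A. cmp C f g = cmp C f h \<longrightarrow> g = h)"

definition is_epi :: "('o, 'm, 'x) addcat_scheme \<Rightarrow> 'o \<Rightarrow> 'o \<Rightarrow> 'm \<Rightarrow> bool" where
  "is_epi C A B f \<longleftrightarrow> f \<in> Hom C A B \<and>
     (\<forall>W\<in>Obj C. \<forall>g\<in>Hom C B W. \<forall>h\<in>Hom C B W. cmp C g f = cmp C h f \<longrightarrow> g = h)"

definition has_kernel :: "('o, 'm, 'x) addcat_scheme \<Rightarrow> 'o \<Rightarrow> 'o \<Rightarrow> 'm \<Rightarrow> bool" where
  "has_kernel C A B e \<longleftrightarrow> (\<exists>K\<in>Obj C. \<exists>k\<in>Hom C K A. cmp C e k = zer C K B \<and>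
     (\<forall>W\<in>Obj C. \<forall>g\<in>Hom C W A. cmp C e g = zer C W B \<longrightarrow>
        (\<exists>h\<in>Hom C W K. cmp C k h = g \<and> (\<forall>h'\<in>Hom C W K. cmp C k h' = g \<longrightarrow> h' = h))))"

definition idempotent_complete :: "('o, 'm, 'x) addcat_scheme \<Rightarrow> bool" where
  "idempotent_complete C \<longleftrightarrow>
     (\<forall>A\<in>Obj C. \<forall>e\<in>Hom C A A. cmp C e e = e \<longrightarrow> has_kernel C A A e)"

definition is_complex :: "('o, 'm, 'x) addcat_scheme \<Rightarrow> nat \<Rightarrow> (nat \<Rightarrow> 'o) \<Rightarrow> (nat \<Rightarrow> 'm) \<Rightarrow> bool" where
  "is_complex C m X d \<longleftrightarrow> (\<forall>k\<le>m. X k \<in> Obj C) \<and> (\<forall>k<m. d k \<in> Hom C (X k) (X (Suc k))) \<and>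
     (\<forall>k. Suc k < m \<longrightarrow> cmp C (d (Suc k)) (d k) = zer C (X k) (X (Suc (Suc k))))"

text \<open>Right exactness: 0 \<rightarrow> M(X m, W) \<rightarrow> ... \<rightarrow> M(X 0, W) exact for all W
(exactness at M(X m,W), ..., M(X 1,W)).\<close>

definition right_exact :: "('o, 'm, 'x) addcat_scheme \<Rightarrow> nat \<Rightarrow> (nat \<Rightarrow> 'o) \<Rightarrow> (nat \<Rightarrow> 'm) \<Rightarrow> bool" where
  "right_exact C m X d \<longleftrightarrow> is_complex C m X d \<and>
     (\<forall>W\<in>Obj C.
        (\<forall>g\<in>Hom C (X m) W. cmp C g (d (m - 1)) = zer C (X (m - 1)) W \<longrightarrow> g = zer C (X m) W) \<and>
        (\<forall>k. 1 \<le> k \<and> k < m \<longrightarrow> (\<forall>g\<in>Hom C (X k) W. cmp C g (d (k - 1)) = zer C (X (k - 1)) W \<longrightarrow>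
            (\<exists>h\<in>Hom C (X (Suc k)) W. g = cmp C h (d k)))))"

definition left_exact :: "('o, 'm, 'x) addcat_scheme \<Rightarrow> nat \<Rightarrow> (nat \<Rightarrow> 'o) \<Rightarrow> (nat \<Rightarrow> 'm) \<Rightarrow> bool" where
  "left_exact C m X d \<longleftrightarrow> is_complex C m X d \<and>
     (\<forall>W\<in>Obj C.
        (\<forall>g\<in>Hom C W (X 0). cmp C (d 0) g = zer C W (X 1) \<longrightarrow> g = zer C W (X 0)) \<and>
        (\<forall>k. 1 \<le> k \<and> k < m \<longrightarrow> (\<forall>g\<in>Hom C W (X k). cmp C (d k) g = zer C W (X (Suc k)) \<longrightarrow>
            (\<exists>h\<in>Hom C W (X (k - 1)). g = cmp C (d (k - 1)) h))))"

definition right_n_exact where "right_n_exact C n X d \<longleftrightarrow> right_exact C (Suc n) X d"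
definition left_n_exact where "left_n_exact C n X d \<longleftrightarrow> left_exact C (Suc n) X d"
definition n_exact where "n_exact C n X d \<longleftrightarrow> left_n_exact C n X d \<and> right_n_exact C n X d"

definition is_n_kernel :: "('o, 'm, 'x) addcat_scheme \<Rightarrow> nat \<Rightarrow> 'o \<Rightarrow> 'o \<Rightarrow> 'm \<Rightarrow> (nat \<Rightarrow> 'o) \<Rightarrow> (nat \<Rightarrow> 'm) \<Rightarrow> bool" where
  "is_n_kernel C n A B f X d \<longleftrightarrow> X n = A \<and> X (Suc n) = B \<and> d n = f \<and> left_n_exact C n X d"

definition is_n_cokernel :: "('o, 'm, 'x) addcat_scheme \<Rightarrow> nat \<Rightarrow> 'o \<Rightarrow> 'o \<Rightarrow> 'm \<Rightarrow> (nat \<Rightarrow> 'o) \<Rightarrow> (nat \<Rightarrow> 'm) \<Rightarrow> bool" where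
  "is_n_cokernel C n A B f X d \<longleftrightarrow> X 0 = A \<and> X 1 = B \<and> d 0 = f \<and> right_n_exact C n X d"

definition n_abelian :: "('o, 'm, 'x) addcat_scheme \<Rightarrow> nat \<Rightarrow> bool" where
  "n_abelian C n \<longleftrightarrow> is_additive C \<and> idempotent_complete C \<and>
     (\<forall>A\<in>Obj C. \<forall>B\<in>Obj C. \<forall>f\<in>Hom C A B.
        (\<exists>X d. is_n_kernel C n A B f X d) \<and> (\<exists>X d. is_n_cokernel C n A B f X d)) \<and>
     (\<forall>A\<in>Obj C. \<forall>B\<in>Obj C. \<forall>f. is_mono C A B f \<longrightarrow>
        (\<forall>X d. is_n_cokernel C n A B f X d \<longrightarrow> n_exact C n X d)) \<and>
     (\<forall>A\<in>Obj C. \<forall>B\<in>Obj C. \<forall>f. is_epi C A B f \<longrightarrow>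
        (\<forall>X d. is_n_kernel C n A B f X d \<longrightarrow> n_exact C n X d))"

definition is_complex_morphism where
  "is_complex_morphism C n X dX Y dY f \<longleftrightarrow>
     (\<forall>k\<le>n. f k \<in> Hom C (X k) (Y k)) \<and>
     (\<forall>k<n. cmp C (f (Suc k)) (dX k) = cmp C (dY k) (f k))"

text \<open>Matrix morphism [[a, b], [c, e]] : A1 \<oplus> A2 \<rightarrow> B1 \<oplus> B2.\<close>

definition mat2 :: "('o, 'm, 'x) addcat_scheme \<Rightarrow> 'o \<Rightarrow> 'o \<Rightarrow> 'o \<Rightarrow> 'o \<Rightarrow> 'm \<Rightarrow> 'm \<Rightarrow> 'm \<Rightarrow> 'm \<Rightarrow> 'm" where
  "mat2 C A1 A2 B1 B2 a b c e =
     add C (add C (cmp C (in1 C B1 B2) (cmp C a (pr1 C A1 A2)))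
                  (cmp C (in1 C B1 B2) (cmp C b (pr2 C A1 A2))))
           (add C (cmp C (in2 C B1 B2) (cmp C c (pr1 C A1 A2)))
                  (cmp C (in2 C B1 B2) (cmp C e (pr2 C A1 A2))))"

text \<open>Mapping cone X 0 \<rightarrow> X 1 \<oplus> Y 0 \<rightarrow> ... \<rightarrow> X n \<oplus> Y (n-1) \<rightarrow> Y n (for n \<ge> 1).\<close>

definition cone_obj :: "('o, 'm, 'x) addcat_scheme \<Rightarrow> nat \<Rightarrow> (nat \<Rightarrow> 'o) \<Rightarrow> (nat \<Rightarrow> 'o) \<Rightarrow> nat \<Rightarrow> 'o" where
  "cone_obj C n X Y k =
     (if k = 0 then X 0 else if k \<le> n then bp C (X k) (Y (k - 1)) else Y n)"

definition cone_diff :: "('o, 'm, 'x) addcat_scheme \<Rightarrow> nat \<Rightarrow> (nat \<Rightarrow> 'o) \<Rightarrow> (nat \<Rightarrow> 'm) \<Rightarrow> (nat \<Rightarrow> 'o) \<Rightarrow> (nat \<Rightarrow> 'm) \<Rightarrow> (nat \<Rightarrow> 'm) \<Rightarrow> nat \<Rightarrow> 'm" where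
  "cone_diff C n X dX Y dY f k =
     (if k = 0 then
        add C (cmp C (in1 C (X 1) (Y 0)) (neg C (dX 0))) (cmp C (in2 C (X 1) (Y 0)) (f 0))
      else if k < n then
        mat2 C (X k) (Y (k - 1)) (X (Suc k)) (Y k)
             (neg C (dX k)) (zer C (Y (k - 1)) (X (Suc k))) (f k) (dY (k - 1))
      else
        add C (cmp C (f n) (pr1 C (X n) (Y (n - 1)))) (cmp C (dY (n - 1)) (pr2 C (X n) (Y (n - 1)))))"

definition n_pushout where
  "n_pushout C n X dX Y dY f \<longleftrightarrow> right_n_exact C n (cone_obj C n X Y) (cone_diff C n X dX Y dY f)"

definition n_pullback where
  "n_pullback C n X dX Y dY f \<longleftrightarrow> left_n_exact C n (cone_obj C n X Y) (cone_diff C n X dX Y dY f)"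

end

theory Submission
  imports Defs
begin


locale acat =
  fixes C :: "('o, 'm, 'x) addcat_scheme"
  assumes additive: "is_additive C"
begin

definition hom :: "'o \<Rightarrow> 'o \<Rightarrow> 'm \<Rightarrow> bool" where
  "hom A B g \<longleftrightarrow> A \<in> Obj C \<and> B \<in> Obj C \<and> g \<in> Hom C A B"

lemma homD: "hom A B g \<Longrightarrow> A \<in> Obj C" "hom A B g \<Longrightarrow> B \<in> Obj C" "hom A B g \<Longrightarrow> g \<in> Hom C A B"
  by (auto simp: hom_def)

lemma homI: "A \<in> Obj C \<Longrightarrow> B \<in> Obj C \<Longrightarrow> g \<in> Hom C A B \<Longrightarrow> hom A B g"
  by (auto simp: hom_def)

lemma pre: "is_preadditive C" using additive by (simp add: is_additive_def)
lemma cat: "is_category C" using pre by (simp add: is_preadditive_def)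

lemma comp_hom[intro]: "hom A B g \<Longrightarrow> hom B D h \<Longrightarrow> hom A D (cmp C h g)"
  using cat unfolding is_category_def hom_def by blast

lemma assoc: "hom A B g \<Longrightarrow> hom B D h \<Longrightarrow> hom D E k \<Longrightarrow> cmp C k (cmp C h g) = cmp C (cmp C k h) g"
  using cat unfolding is_category_def hom_def by blast

lemma id_hom[intro]: "A \<in> Obj C \<Longrightarrow> hom A A (idm C A)"
  using cat unfolding is_category_def hom_def by blast

lemma id_l: "hom A B g \<Longrightarrow> cmp C (idm C B) g = g"
  using cat unfolding is_category_def hom_def by blast
lemma id_r: "hom A B g \<Longrightarrow> cmp C g (idm C A) = g"
  using cat unfolding is_category_def hom_def by blast

lemma zer_hom[intro]: "A \<in> Obj C \<Longrightarrow> B \<in> Obj C \<Longrightarrow> hom A B (zer C A B)"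
  using pre unfolding is_preadditive_def hom_def by blast
lemma add_hom[intro]: "hom A B g \<Longrightarrow> hom A B h \<Longrightarrow> hom A B (add C g h)"
  using pre unfolding is_preadditive_def hom_def by blast
lemma neg_hom[intro]: "hom A B g \<Longrightarrow> hom A B (neg C g)"
  using pre unfolding is_preadditive_def hom_def by blast
lemma add_assoc: "hom A B g \<Longrightarrow> hom A B h \<Longrightarrow> hom A B k \<Longrightarrow> add C (add C g h) k = add C g (add C h k)"
  using pre unfolding is_preadditive_def hom_def by blast
lemma add_comm: "hom A B g \<Longrightarrow> hom A B h \<Longrightarrow> add C g h = add C h g"
  using pre unfolding is_preadditive_def hom_def by blast
lemma add_zer: "hom A B g \<Longrightarrow> add C g (zer C A B) = g"
  using pre unfolding is_preadditive_def hom_def by blast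
lemma add_neg: "hom A B g \<Longrightarrow> add C g (neg C g) = zer C A B"
  using pre unfolding is_preadditive_def hom_def by blast
lemma distl: "hom A B g \<Longrightarrow> hom A B g' \<Longrightarrow> hom B D h \<Longrightarrow> cmp C h (add C g g') = add C (cmp C h g) (cmp C h g')"
  using pre unfolding is_preadditive_def hom_def by blast
lemma distr: "hom A B g \<Longrightarrow> hom B D h \<Longrightarrow> hom B D h' \<Longrightarrow> cmp C (add C h h') g = add C (cmp C h g) (cmp C h' g)"
  using pre unfolding is_preadditive_def hom_def by blast

lemma zer_add: "hom A B g \<Longrightarrow> add C (zer C A B) g = g"
  by (metis add_comm add_zer homD(1,2) zer_hom)

lemma neg_unique: assumes "hom A B g" "hom A B h" "add C g h = zer C A B" shows "h = neg C g"
proof -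
  have "h = add C h (zer C A B)" using assms by (simp add: add_zer)
  also have "\<dots> = add C h (add C g (neg C g))" using assms by (simp add: add_neg)
  also have "\<dots> = add C (add C h g) (neg C g)" using assms by (simp add: add_assoc neg_hom)
  also have "\<dots> = add C (zer C A B) (neg C g)" using assms by (simp add: add_comm)
  also have "\<dots> = neg C g" using assms by (simp add: zer_add neg_hom)
  finally show ?thesis .
qed

lemma idem_zero: assumes "hom A B x" "add C x x = x" shows "x = zer C A B"
proof -
  have "x = add C x (add C x (neg C x))" using add_neg[OF assms(1)] add_zer[OF assms(1)] by simp
  also have "\<dots> = add C (add C x x) (neg C x)" using add_assoc[OF assms(1) assms(1) neg_hom[OF assms(1)]] by simp
  also have "\<dots> = zer C A B" using assms(2) add_neg[OF assms(1)] by simp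
  finally show ?thesis .
qed

lemma comp_zer_r: assumes "hom B D h" "A \<in> Obj C" shows "cmp C h (zer C A B) = zer C A D"
proof -
  have B: "B \<in> Obj C" using assms homD by blast
  have z: "hom A B (zer C A B)" using assms B by blast
  have "cmp C h (zer C A B) = cmp C h (add C (zer C A B) (zer C A B))" using z by (simp add: add_zer)
  also have "\<dots> = add C (cmp C h (zer C A B)) (cmp C h (zer C A B))" using z assms by (simp add: distl)
  finally show ?thesis using idem_zero[of A D "cmp C h (zer C A B)"] z assms by auto
qed

lemma comp_zer_l: assumes "hom A B g" "D \<in> Obj C" shows "cmp C (zer C B D) g = zer C A D"
proof -
  have B: "B \<in> Obj C" using assms homD by blast
  have z: "hom B D (zer C B D)" using assms B by blast
  have "cmp C (zer C B D) g = cmp C (add C (zer C B D) (zer C B D)) g" using z by (simp add: add_zer)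
  also have "\<dots> = add C (cmp C (zer C B D) g) (cmp C (zer C B D) g)" using z assms by (simp add: distr)
  finally show ?thesis using idem_zero[of A D "cmp C (zer C B D) g"] z assms by auto
qed

lemma neg_comp: assumes "hom A B g" "hom B D h" shows "cmp C (neg C h) g = neg C (cmp C h g)"
proof -
  have "add C (cmp C h g) (cmp C (neg C h) g) = cmp C (add C h (neg C h)) g"
    using assms by (simp add: distr neg_hom)
  also have "\<dots> = zer C A D" using assms by (simp add: add_neg comp_zer_l homD)
  finally show ?thesis using neg_unique assms by blast
qed

lemma comp_neg: assumes "hom A B g" "hom B D h" shows "cmp C h (neg C g) = neg C (cmp C h g)"
proof -
  have "add C (cmp C h g) (cmp C h (neg C g)) = cmp C h (add C g (neg C g))"
    using assms by (simp add: distl neg_hom)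
  also have "\<dots> = zer C A D" using assms by (simp add: add_neg comp_zer_r homD)
  finally show ?thesis using neg_unique assms by blast
qed

lemma neg_neg: assumes "hom A B g" shows "neg C (neg C g) = g"
proof -
  have "add C (neg C g) g = zer C A B" using assms add_comm[of A B "neg C g" g] add_neg[of A B g] neg_hom by auto
  thus ?thesis using neg_unique[of A B "neg C g" g] assms neg_hom by metis
qed

lemma neg_zer: "A \<in> Obj C \<Longrightarrow> B \<in> Obj C \<Longrightarrow> neg C (zer C A B) = zer C A B"
  by (metis neg_unique zer_hom add_zer)

lemma eq_of_diff: assumes "hom A B g" "hom A B h" "add C g (neg C h) = zer C A B" shows "g = h"
proof -
  have "neg C h = neg C g" using neg_unique[OF _ _ assms(3)] assms by auto
  thus ?thesis using neg_neg assms by metis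
qed

lemma neg_eq_zer: assumes "hom A B g" "neg C g = zer C A B" shows "g = zer C A B"
  using assms neg_neg neg_zer homD by metis

lemma neg_inj: assumes "hom A B g" "hom A B h" "neg C g = neg C h" shows "g = h"
  using assms neg_neg by metis

lemma bp: assumes "A \<in> Obj C" "B \<in> Obj C" shows
  "bp C A B \<in> Obj C" "hom A (bp C A B) (in1 C A B)" "hom B (bp C A B) (in2 C A B)"
  "hom (bp C A B) A (pr1 C A B)" "hom (bp C A B) B (pr2 C A B)"
  "cmp C (pr1 C A B) (in1 C A B) = idm C A" "cmp C (pr2 C A B) (in2 C A B) = idm C B"
  "cmp C (pr1 C A B) (in2 C A B) = zer C B A" "cmp C (pr2 C A B) (in1 C A B) = zer C A B"
  "add C (cmp C (in1 C A B) (pr1 C A B)) (cmp C (in2 C A B) (pr2 C A B)) = idm C (bp C A B)"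
  using additive assms unfolding is_additive_def hom_def by auto


lemma decomp_out: assumes A: "A \<in> Obj C" and B: "B \<in> Obj C" and u: "hom W (bp C A B) u"
  shows "u = add C (cmp C (in1 C A B) (cmp C (pr1 C A B) u)) (cmp C (in2 C A B) (cmp C (pr2 C A B) u))"
proof -
  note b = bp[OF A B]
  have "u = cmp C (idm C (bp C A B)) u" using u by (simp add: id_l)
  also have "\<dots> = cmp C (add C (cmp C (in1 C A B) (pr1 C A B)) (cmp C (in2 C A B) (pr2 C A B))) u"
    using b by simp
  also have "\<dots> = add C (cmp C (cmp C (in1 C A B) (pr1 C A B)) u) (cmp C (cmp C (in2 C A B) (pr2 C A B)) u)"
    using b u by (intro distr) auto
  also have "\<dots> = add C (cmp C (in1 C A B) (cmp C (pr1 C A B) u)) (cmp C (in2 C A B) (cmp C (pr2 C A B) u))"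
    using b u by (simp add: assoc)
  finally show ?thesis .
qed

lemma decomp_in: assumes A: "A \<in> Obj C" and B: "B \<in> Obj C" and u: "hom (bp C A B) W u"
  shows "u = add C (cmp C (cmp C u (in1 C A B)) (pr1 C A B)) (cmp C (cmp C u (in2 C A B)) (pr2 C A B))"
proof -
  note b = bp[OF A B]
  have "u = cmp C u (idm C (bp C A B))" using u by (simp add: id_r)
  also have "\<dots> = cmp C u (add C (cmp C (in1 C A B) (pr1 C A B)) (cmp C (in2 C A B) (pr2 C A B)))"
    using b by simp
  also have "\<dots> = add C (cmp C u (cmp C (in1 C A B) (pr1 C A B))) (cmp C u (cmp C (in2 C A B) (pr2 C A B)))"
    using b u by (intro distl) auto
  also have "\<dots> = add C (cmp C (cmp C u (in1 C A B)) (pr1 C A B)) (cmp C (cmp C u (in2 C A B)) (pr2 C A B))"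
    using b u by (simp add: assoc)
  finally show ?thesis .
qed

lemma ext_out: assumes A: "A \<in> Obj C" and B: "B \<in> Obj C" and u: "hom W (bp C A B) u" and v: "hom W (bp C A B) v"
  and "cmp C (pr1 C A B) u = cmp C (pr1 C A B) v" "cmp C (pr2 C A B) u = cmp C (pr2 C A B) v"
  shows "u = v"
  using decomp_out[OF A B u] decomp_out[OF A B v] assms(5,6) by simp

lemma ext_in: assumes A: "A \<in> Obj C" and B: "B \<in> Obj C" and u: "hom (bp C A B) W u" and v: "hom (bp C A B) W v"
  and "cmp C u (in1 C A B) = cmp C v (in1 C A B)" "cmp C u (in2 C A B) = cmp C v (in2 C A B)"
  shows "u = v"
  using decomp_in[OF A B u] decomp_in[OF A B v] assms(5,6) by simp

lemma pr_pair: assumes A: "A \<in> Obj C" and B: "B \<in> Obj C" and a: "hom W A a" and b: "hom W B b"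
  shows "cmp C (pr1 C A B) (add C (cmp C (in1 C A B) a) (cmp C (in2 C A B) b)) = a"
    "cmp C (pr2 C A B) (add C (cmp C (in1 C A B) a) (cmp C (in2 C A B) b)) = b"
proof -
  note bb = bp[OF A B]
  have W: "W \<in> Obj C" using a homD by blast
  have h1: "hom W (bp C A B) (cmp C (in1 C A B) a)" "hom W (bp C A B) (cmp C (in2 C A B) b)"
    using bb a b by auto
  have "cmp C (pr1 C A B) (add C (cmp C (in1 C A B) a) (cmp C (in2 C A B) b))
      = add C (cmp C (pr1 C A B) (cmp C (in1 C A B) a)) (cmp C (pr1 C A B) (cmp C (in2 C A B) b))"
    by (rule distl[OF h1 bb(4)])
  also have "\<dots> = add C (cmp C (cmp C (pr1 C A B) (in1 C A B)) a) (cmp C (cmp C (pr1 C A B) (in2 C A B)) b)"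
    using assoc[OF a bb(2) bb(4)] assoc[OF b bb(3) bb(4)] by simp
  also have "\<dots> = add C a (zer C W A)" using bb id_l[OF a] comp_zer_l[OF b A] by simp
  also have "\<dots> = a" using add_zer[OF a] .
  finally show "cmp C (pr1 C A B) (add C (cmp C (in1 C A B) a) (cmp C (in2 C A B) b)) = a" .
  have "cmp C (pr2 C A B) (add C (cmp C (in1 C A B) a) (cmp C (in2 C A B) b))
      = add C (cmp C (pr2 C A B) (cmp C (in1 C A B) a)) (cmp C (pr2 C A B) (cmp C (in2 C A B) b))"
    by (rule distl[OF h1 bb(5)])
  also have "\<dots> = add C (cmp C (cmp C (pr2 C A B) (in1 C A B)) a) (cmp C (cmp C (pr2 C A B) (in2 C A B)) b)"
    using assoc[OF a bb(2) bb(5)] assoc[OF b bb(3) bb(5)] by simp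
  also have "\<dots> = add C (zer C W B) b" using bb id_l[OF b] comp_zer_l[OF a B] by simp
  also have "\<dots> = b" using zer_add[OF b] .
  finally show "cmp C (pr2 C A B) (add C (cmp C (in1 C A B) a) (cmp C (in2 C A B) b)) = b" .
qed

lemma copair_in: assumes A: "A \<in> Obj C" and B: "B \<in> Obj C" and a: "hom A W a" and b: "hom B W b"
  shows "cmp C (add C (cmp C a (pr1 C A B)) (cmp C b (pr2 C A B))) (in1 C A B) = a"
    "cmp C (add C (cmp C a (pr1 C A B)) (cmp C b (pr2 C A B))) (in2 C A B) = b"
proof -
  note bb = bp[OF A B]
  have W: "W \<in> Obj C" using a homD by blast
  have h1: "hom (bp C A B) W (cmp C a (pr1 C A B))" "hom (bp C A B) W (cmp C b (pr2 C A B))"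
    using bb a b by auto
  have "cmp C (add C (cmp C a (pr1 C A B)) (cmp C b (pr2 C A B))) (in1 C A B)
      = add C (cmp C (cmp C a (pr1 C A B)) (in1 C A B)) (cmp C (cmp C b (pr2 C A B)) (in1 C A B))"
    by (rule distr[OF bb(2) h1])
  also have "\<dots> = add C (cmp C a (cmp C (pr1 C A B) (in1 C A B))) (cmp C b (cmp C (pr2 C A B) (in1 C A B)))"
    using assoc[OF bb(2) bb(4) a] assoc[OF bb(2) bb(5) b] by simp
  also have "\<dots> = add C a (zer C A W)" using bb id_r[OF a] comp_zer_r[OF b A] by simp
  also have "\<dots> = a" using add_zer[OF a] .
  finally show "cmp C (add C (cmp C a (pr1 C A B)) (cmp C b (pr2 C A B))) (in1 C A B) = a" .
  have "cmp C (add C (cmp C a (pr1 C A B)) (cmp C b (pr2 C A B))) (in2 C A B)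
      = add C (cmp C (cmp C a (pr1 C A B)) (in2 C A B)) (cmp C (cmp C b (pr2 C A B)) (in2 C A B))"
    by (rule distr[OF bb(3) h1])
  also have "\<dots> = add C (cmp C a (cmp C (pr1 C A B) (in2 C A B))) (cmp C b (cmp C (pr2 C A B) (in2 C A B)))"
    using assoc[OF bb(3) bb(4) a] assoc[OF bb(3) bb(5) b] by simp
  also have "\<dots> = add C (zer C B W) b" using bb id_r[OF b] comp_zer_r[OF a B] by simp
  also have "\<dots> = b" using zer_add[OF b] .
  finally show "cmp C (add C (cmp C a (pr1 C A B)) (cmp C b (pr2 C A B))) (in2 C A B) = b" .
qed

lemma mono_zero: assumes "is_mono C A B h" "hom A B h" "hom W A g" "cmp C h g = zer C W B" shows "g = zer C W A"
proof -
  have W: "W \<in> Obj C" "A \<in> Obj C" using assms homD by auto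
  have "cmp C h (zer C W A) = zer C W B" using comp_zer_r[OF assms(2) W(1)] .
  thus ?thesis using assms W unfolding is_mono_def hom_def by (metis zer_hom hom_def)
qed

lemma mono_intro: assumes h: "hom A B h" and z: "\<And>W g. hom W A g \<Longrightarrow> cmp C h g = zer C W B \<Longrightarrow> g = zer C W A"
  shows "is_mono C A B h"
  unfolding is_mono_def
proof (intro conjI ballI impI)
  show "h \<in> Hom C A B" using h homD by blast
  fix W g g' assume W: "W \<in> Obj C" and g: "g \<in> Hom C W A" and g': "g' \<in> Hom C W A" and e: "cmp C h g = cmp C h g'"
  have A: "A \<in> Obj C" using h homD by blast
  have gg: "hom W A g" "hom W A g'" using W A g g' homI by auto
  have "cmp C h (add C g (neg C g')) = add C (cmp C h g) (neg C (cmp C h g'))"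
    using gg h by (simp add: distl comp_neg neg_hom)
  also have "\<dots> = zer C W B" using e add_neg gg h by (metis comp_hom)
  finally have "add C g (neg C g') = zer C W A" using z gg by blast
  thus "g = g'" using eq_of_diff gg by blast
qed

lemma epi_zero: assumes "is_epi C A B h" "hom A B h" "hom B W g" "cmp C g h = zer C A W" shows "g = zer C B W"
proof -
  have W: "W \<in> Obj C" "A \<in> Obj C" using assms homD by auto
  have "cmp C (zer C B W) h = zer C A W" using comp_zer_l[OF assms(2) W(1)] .
  thus ?thesis using assms W unfolding is_epi_def hom_def by (metis zer_hom hom_def)
qed

lemma epi_intro: assumes h: "hom A B h" and z: "\<And>W g. hom B W g \<Longrightarrow> cmp C g h = zer C A W \<Longrightarrow> g = zer C B W"
  shows "is_epi C A B h"
  unfolding is_epi_def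
proof (intro conjI ballI impI)
  show "h \<in> Hom C A B" using h homD by blast
  fix W g g' assume W: "W \<in> Obj C" and g: "g \<in> Hom C B W" and g': "g' \<in> Hom C B W" and e: "cmp C g h = cmp C g' h"
  have B: "B \<in> Obj C" using h homD by blast
  have gg: "hom B W g" "hom B W g'" using W B g g' homI by auto
  have "cmp C (add C g (neg C g')) h = add C (cmp C g h) (neg C (cmp C g' h))"
    using gg h by (simp add: distr neg_comp neg_hom)
  also have "\<dots> = zer C A W" using e add_neg gg h by (metis comp_hom)
  finally have "add C g (neg C g') = zer C B W" using z gg by blast
  thus "g = g'" using eq_of_diff gg by blast
qed


lemma mat2_pr: assumes A1: "A1 \<in> Obj C" and A2: "A2 \<in> Obj C" and B1: "B1 \<in> Obj C" and B2: "B2 \<in> Obj C"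
  and a: "hom A1 B1 a" and b: "hom A2 B1 b" and c: "hom A1 B2 c" and e: "hom A2 B2 e"
  shows "cmp C (pr1 C B1 B2) (mat2 C A1 A2 B1 B2 a b c e) = add C (cmp C a (pr1 C A1 A2)) (cmp C b (pr2 C A1 A2))"
    "cmp C (pr2 C B1 B2) (mat2 C A1 A2 B1 B2 a b c e) = add C (cmp C c (pr1 C A1 A2)) (cmp C e (pr2 C A1 A2))"
    "hom (bp C A1 A2) (bp C B1 B2) (mat2 C A1 A2 B1 B2 a b c e)"
proof -
  note ba = bp[OF A1 A2] and bb = bp[OF B1 B2]
  have u: "hom (bp C A1 A2) B1 (add C (cmp C a (pr1 C A1 A2)) (cmp C b (pr2 C A1 A2)))"
    using ba a b by auto
  have v: "hom (bp C A1 A2) B2 (add C (cmp C c (pr1 C A1 A2)) (cmp C e (pr2 C A1 A2)))"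
    using ba c e by auto
  have m: "mat2 C A1 A2 B1 B2 a b c e = add C (cmp C (in1 C B1 B2) (add C (cmp C a (pr1 C A1 A2)) (cmp C b (pr2 C A1 A2))))
      (cmp C (in2 C B1 B2) (add C (cmp C c (pr1 C A1 A2)) (cmp C e (pr2 C A1 A2))))"
    unfolding mat2_def
    using distl[OF comp_hom[OF ba(4) a] comp_hom[OF ba(5) b] bb(2)]
      distl[OF comp_hom[OF ba(4) c] comp_hom[OF ba(5) e] bb(3)] by simp
  show "cmp C (pr1 C B1 B2) (mat2 C A1 A2 B1 B2 a b c e) = add C (cmp C a (pr1 C A1 A2)) (cmp C b (pr2 C A1 A2))"
    using pr_pair(1)[OF B1 B2 u v] m by simp
  show "cmp C (pr2 C B1 B2) (mat2 C A1 A2 B1 B2 a b c e) = add C (cmp C c (pr1 C A1 A2)) (cmp C e (pr2 C A1 A2))"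
    using pr_pair(2)[OF B1 B2 u v] m by simp
  show "hom (bp C A1 A2) (bp C B1 B2) (mat2 C A1 A2 B1 B2 a b c e)"
    using m u v bb by auto
qed

end



context acat begin
abbreviation cp (infixr "\<cdot>" 75) where "h \<cdot> g \<equiv> cmp C h g"
abbreviation ad (infixl "\<oplus>" 65) where "x \<oplus> y \<equiv> add C x y"
abbreviation ng ("\<ominus>_" [81] 80) where "\<ominus> x \<equiv> neg C x"

lemma zc: "hom W A x \<Longrightarrow> hom A B g \<Longrightarrow> hom B D h \<Longrightarrow> h \<cdot> g = zer C A D \<Longrightarrow> h \<cdot> (g \<cdot> x) = zer C W D"
  using assoc[of W A x B g D h] comp_zer_l[of W A x D] homD by simp

lemma cc: "hom W A x \<Longrightarrow> hom A B g \<Longrightarrow> hom B D h \<Longrightarrow> hom A B' g' \<Longrightarrow> hom B' D h' \<Longrightarrow> h \<cdot> g = h' \<cdot> g'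
   \<Longrightarrow> h \<cdot> (g \<cdot> x) = h' \<cdot> (g' \<cdot> x)"
  using assoc[of W A x B g D h] assoc[of W A x B' g' D h'] by simp

lemma nn_comp: "hom W A x \<Longrightarrow> hom A B h \<Longrightarrow> h \<cdot> (\<ominus> x) = \<ominus>(h \<cdot> x)"
  by (rule comp_neg)

lemma neg_add_cancel: "hom A B x \<Longrightarrow> (\<ominus> x) \<oplus> x = zer C A B"
  using add_comm[of A B "\<ominus> x" x] add_neg[of A B x] neg_hom[of A B x] by simp


lemma G1: "hom W A u \<Longrightarrow> hom W A b \<Longrightarrow> (\<ominus> u) \<oplus> (b \<oplus> u) = b"
  using add_comm[of W A b u] add_assoc[of W A "\<ominus> u" u b] neg_add_cancel[of W A u] zer_add[of W A b] neg_hom[of W A u]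
  by simp

lemma G2: "hom W A u \<Longrightarrow> hom W A b \<Longrightarrow> b \<oplus> u = zer C W A \<Longrightarrow> b = \<ominus> u"
  using neg_unique[of W A u b] add_comm[of W A b u] by simp

lemma cancel3: "hom W A u \<Longrightarrow> (\<ominus> u) \<oplus> (u \<oplus> zer C W A) = zer C W A"
  using add_zer[of W A u] neg_add_cancel[of W A u] by simp


end

locale cone = acat C for C :: "('o, 'm, 'x) addcat_scheme" +
  fixes n :: nat and X Y :: "nat \<Rightarrow> 'o" and dX dY f :: "nat \<Rightarrow> 'm"
  assumes n1: "1 \<le> n"
    and Xc: "is_complex C (Suc n) X dX"
    and Yc: "is_complex C n Y dY"
    and fm: "is_complex_morphism C n X dX Y dY f"
begin

abbreviation "K \<equiv> cone_obj C n X Y"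
abbreviation "D \<equiv> cone_diff C n X dX Y dY f"
abbreviation "i1 k \<equiv> in1 C (X k) (Y (k - 1))"
abbreviation "i2 k \<equiv> in2 C (X k) (Y (k - 1))"
abbreviation "p1 k \<equiv> pr1 C (X k) (Y (k - 1))"
abbreviation "p2 k \<equiv> pr2 C (X k) (Y (k - 1))"

lemma Xo: "k \<le> Suc n \<Longrightarrow> X k \<in> Obj C" using Xc unfolding is_complex_def by auto
lemma Yo: "k \<le> n \<Longrightarrow> Y k \<in> Obj C" using Yc unfolding is_complex_def by auto
lemma dXh: "k \<le> n \<Longrightarrow> hom (X k) (X (Suc k)) (dX k)" using Xc Xo unfolding is_complex_def hom_def by auto
lemma dYh: "k < n \<Longrightarrow> hom (Y k) (Y (Suc k)) (dY k)" using Yc Yo unfolding is_complex_def hom_def by auto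
lemma dXX: "Suc k \<le> n \<Longrightarrow> cmp C (dX (Suc k)) (dX k) = zer C (X k) (X (Suc (Suc k)))"
  using Xc unfolding is_complex_def by auto
lemma dYY: "Suc k < n \<Longrightarrow> cmp C (dY (Suc k)) (dY k) = zer C (Y k) (Y (Suc (Suc k)))"
  using Yc unfolding is_complex_def by auto
lemma fh: "k \<le> n \<Longrightarrow> hom (X k) (Y k) (f k)" using fm Xo Yo unfolding is_complex_morphism_def hom_def by auto
lemma fc: "k < n \<Longrightarrow> cmp C (f (Suc k)) (dX k) = cmp C (dY k) (f k)" using fm unfolding is_complex_morphism_def by auto

lemma K0: "K 0 = X 0" by (simp add: cone_obj_def)
lemma Kb: "1 \<le> k \<Longrightarrow> k \<le> n \<Longrightarrow> K k = bp C (X k) (Y (k - 1))" by (simp add: cone_obj_def)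
lemma KS: "K (Suc n) = Y n" by (simp add: cone_obj_def)

lemma bpk: assumes "1 \<le> k" "k \<le> n" shows
  "K k \<in> Obj C" "hom (X k) (K k) (i1 k)" "hom (Y (k - 1)) (K k) (i2 k)"
  "hom (K k) (X k) (p1 k)" "hom (K k) (Y (k - 1)) (p2 k)"
  using bp[OF Xo Yo, of k "k - 1"] Kb[OF assms] assms by auto

lemma Ko: "k \<le> Suc n \<Longrightarrow> K k \<in> Obj C"
  using bpk(1)[of k] K0 KS Xo Yo by (cases "k = 0"; cases "k = Suc n") auto

lemma D0: "D 0 = add C (cmp C (i1 1) (neg C (dX 0))) (cmp C (i2 1) (f 0))" by (simp add: cone_diff_def)
lemma Dm: "1 \<le> k \<Longrightarrow> k < n \<Longrightarrow> D k = mat2 C (X k) (Y (k - 1)) (X (Suc k)) (Y k)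
             (neg C (dX k)) (zer C (Y (k - 1)) (X (Suc k))) (f k) (dY (k - 1))" by (simp add: cone_diff_def)
lemma Dn: "D n = add C (cmp C (f n) (p1 n)) (cmp C (dY (n - 1)) (p2 n))" using n1 by (simp add: cone_diff_def)

lemma D0_pr: "cmp C (p1 1) (D 0) = neg C (dX 0)" "cmp C (p2 1) (D 0) = f 0"
proof -
  have h: "X 1 \<in> Obj C" "Y 0 \<in> Obj C" "hom (X 0) (X 1) (neg C (dX 0))" "hom (X 0) (Y 0) (f 0)"
    using Xo Yo neg_hom[OF dXh[of 0]] fh[of 0] n1 by auto
  show "cmp C (p1 1) (D 0) = neg C (dX 0)" "cmp C (p2 1) (D 0) = f 0"
    using pr_pair[OF h] D0 by auto
qed

lemma D0_hom: "hom (K 0) (K 1) (D 0)"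
  using D0 K0 Kb[of 1] n1 bp[OF Xo Yo, of 1 0] neg_hom[OF dXh, of 0] fh[of 0] by auto

lemma Dm_pr: assumes "1 \<le> k" "k < n"
  shows "cmp C (p1 (Suc k)) (D k) = cmp C (neg C (dX k)) (p1 k)"
    "cmp C (p2 (Suc k)) (D k) = add C (cmp C (f k) (p1 k)) (cmp C (dY (k - 1)) (p2 k))"
    "hom (K k) (K (Suc k)) (D k)"
proof -
  have o: "X k \<in> Obj C" "Y (k - 1) \<in> Obj C" "X (Suc k) \<in> Obj C" "Y k \<in> Obj C" using assms Xo Yo by auto
  have hh: "hom (X k) (X (Suc k)) (neg C (dX k))" "hom (X k) (Y k) (f k)" "hom (Y (k - 1)) (Y k) (dY (k - 1))"
    using neg_hom[OF dXh[of k]] fh[of k] dYh[of "k - 1"] assms by auto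
  note mp = mat2_pr[OF o hh(1) zer_hom[OF o(2) o(3)] hh(2,3)]
  have z: "cmp C (zer C (Y (k - 1)) (X (Suc k))) (p2 k) = zer C (K k) (X (Suc k))"
    using comp_zer_l[OF bpk(5)[OF assms(1)] o(3)] assms by auto
  show "cmp C (p1 (Suc k)) (D k) = cmp C (neg C (dX k)) (p1 k)"
    using mp(1) Dm[OF assms] assms z add_zer comp_hom bpk(4)[OF assms(1)] neg_hom[OF dXh, of k] by auto
  show "cmp C (p2 (Suc k)) (D k) = add C (cmp C (f k) (p1 k)) (cmp C (dY (k - 1)) (p2 k))"
    using mp(2) Dm[OF assms] assms by auto
  show "hom (K k) (K (Suc k)) (D k)" using mp(3) Dm[OF assms] assms Kb by auto
qed

lemma Dn_in: "cmp C (D n) (i1 n) = f n" "cmp C (D n) (i2 n) = dY (n - 1)" "hom (K n) (K (Suc n)) (D n)"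
proof -
  have h: "hom (X n) (Y n) (f n)" "hom (Y (n - 1)) (Y n) (dY (n - 1))" using fh dYh[of "n - 1"] n1 by auto
  show "cmp C (D n) (i1 n) = f n" "cmp C (D n) (i2 n) = dY (n - 1)"
    using copair_in[OF Xo Yo h] Dn by auto
  show "hom (K n) (K (Suc n)) (D n)" using Dn h bpk[OF n1 order.refl] KS by auto
qed

lemma D_hom: "k \<le> n \<Longrightarrow> hom (K k) (K (Suc k)) (D k)"
  using D0_hom Dm_pr(3) Dn_in(3) by (metis One_nat_def Suc_leI le_neq_implies_less not_gr_zero)


lemma E0: assumes x: "hom W (X 0) x"
  shows "p1 1 \<cdot> (D 0 \<cdot> x) = \<ominus>(dX 0 \<cdot> x)" "p2 1 \<cdot> (D 0 \<cdot> x) = f 0 \<cdot> x"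
proof -
  have x': "hom W (K 0) x" using x K0 by simp
  have h1: "hom (K 1) (X 1) (p1 1)" "hom (K 1) (Y 0) (p2 1)" using bpk[of 1] n1 by auto
  have d: "hom (X 0) (X 1) (dX 0)" using dXh[of 0] by simp
  show "p1 1 \<cdot> (D 0 \<cdot> x) = \<ominus>(dX 0 \<cdot> x)"
    using assoc[OF x' D0_hom h1(1)] D0_pr(1) neg_comp[OF x d] by simp
  show "p2 1 \<cdot> (D 0 \<cdot> x) = f 0 \<cdot> x"
    using assoc[OF x' D0_hom h1(2)] D0_pr(2) by simp
qed

lemma Em: assumes k: "1 \<le> k" "k < n" and g: "hom W (K k) g"
  shows "p1 (Suc k) \<cdot> (D k \<cdot> g) = \<ominus>(dX k \<cdot> (p1 k \<cdot> g))"
    "p2 (Suc k) \<cdot> (D k \<cdot> g) = f k \<cdot> (p1 k \<cdot> g) \<oplus> dY (k - 1) \<cdot> (p2 k \<cdot> g)"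
proof -
  have h1: "hom (K (Suc k)) (X (Suc k)) (p1 (Suc k))" "hom (K (Suc k)) (Y k) (p2 (Suc k))"
    using bpk[of "Suc k"] k by auto
  have h0: "hom (K k) (X k) (p1 k)" "hom (K k) (Y (k - 1)) (p2 k)" using bpk[of k] k by auto
  have d: "hom (X k) (X (Suc k)) (dX k)" "hom (X k) (Y k) (f k)" "hom (Y (k - 1)) (Y k) (dY (k - 1))"
    using dXh[of k] fh[of k] dYh[of "k - 1"] k by auto
  note Dk = Dm_pr[OF k]
  have "p1 (Suc k) \<cdot> (D k \<cdot> g) = (p1 (Suc k) \<cdot> D k) \<cdot> g" using assoc[OF g Dk(3) h1(1)] .
  also have "\<dots> = ((\<ominus>dX k) \<cdot> p1 k) \<cdot> g" using Dk(1) by simp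
  also have "\<dots> = (\<ominus>dX k) \<cdot> (p1 k \<cdot> g)" using assoc[OF g h0(1) neg_hom[OF d(1)]] by simp
  also have "\<dots> = \<ominus>(dX k \<cdot> (p1 k \<cdot> g))" using neg_comp[OF comp_hom[OF g h0(1)] d(1)] .
  finally show "p1 (Suc k) \<cdot> (D k \<cdot> g) = \<ominus>(dX k \<cdot> (p1 k \<cdot> g))" .
  have "p2 (Suc k) \<cdot> (D k \<cdot> g) = (p2 (Suc k) \<cdot> D k) \<cdot> g" using assoc[OF g Dk(3) h1(2)] .
  also have "\<dots> = (f k \<cdot> p1 k \<oplus> dY (k - 1) \<cdot> p2 k) \<cdot> g" using Dk(2) by simp
  also have "\<dots> = (f k \<cdot> p1 k) \<cdot> g \<oplus> (dY (k - 1) \<cdot> p2 k) \<cdot> g"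
    using distr[OF g comp_hom[OF h0(1) d(2)] comp_hom[OF h0(2) d(3)]] .
  also have "\<dots> = f k \<cdot> (p1 k \<cdot> g) \<oplus> dY (k - 1) \<cdot> (p2 k \<cdot> g)"
    using assoc[OF g h0(1) d(2)] assoc[OF g h0(2) d(3)] by simp
  finally show "p2 (Suc k) \<cdot> (D k \<cdot> g) = f k \<cdot> (p1 k \<cdot> g) \<oplus> dY (k - 1) \<cdot> (p2 k \<cdot> g)" .
qed

lemma En: assumes g: "hom W (K n) g"
  shows "D n \<cdot> g = f n \<cdot> (p1 n \<cdot> g) \<oplus> dY (n - 1) \<cdot> (p2 n \<cdot> g)"
proof -
  have h0: "hom (K n) (X n) (p1 n)" "hom (K n) (Y (n - 1)) (p2 n)" using bpk[of n] n1 by auto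
  have d: "hom (X n) (Y n) (f n)" "hom (Y (n - 1)) (Y n) (dY (n - 1))"
    using fh[of n] dYh[of "n - 1"] n1 by auto
  have "D n \<cdot> g = (f n \<cdot> p1 n \<oplus> dY (n - 1) \<cdot> p2 n) \<cdot> g" using Dn by simp
  also have "\<dots> = (f n \<cdot> p1 n) \<cdot> g \<oplus> (dY (n - 1) \<cdot> p2 n) \<cdot> g"
    using distr[OF g comp_hom[OF h0(1) d(1)] comp_hom[OF h0(2) d(2)]] .
  also have "\<dots> = f n \<cdot> (p1 n \<cdot> g) \<oplus> dY (n - 1) \<cdot> (p2 n \<cdot> g)"
    using assoc[OF g h0(1) d(1)] assoc[OF g h0(2) d(2)] by simp
  finally show ?thesis .
qed

lemma pairk: assumes k: "1 \<le> k" "k \<le> n" and a: "hom W (X k) a" and b: "hom W (Y (k - 1)) b"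
  shows "hom W (K k) (i1 k \<cdot> a \<oplus> i2 k \<cdot> b)" "p1 k \<cdot> (i1 k \<cdot> a \<oplus> i2 k \<cdot> b) = a"
    "p2 k \<cdot> (i1 k \<cdot> a \<oplus> i2 k \<cdot> b) = b"
  using bpk[OF k] a b pr_pair[OF Xo Yo a b] k by auto

lemma extk: assumes k: "1 \<le> k" "k \<le> n" and u: "hom W (K k) u" and v: "hom W (K k) v"
  and "p1 k \<cdot> u = p1 k \<cdot> v" "p2 k \<cdot> u = p2 k \<cdot> v" shows "u = v"
  using ext_out[OF Xo Yo, of k "k - 1" W u v] assms Kb[OF k] by auto

lemma zerk: assumes k: "1 \<le> k" "k \<le> n" and u: "hom W (K k) u"
  and "p1 k \<cdot> u = zer C W (X k)" "p2 k \<cdot> u = zer C W (Y (k - 1))" shows "u = zer C W (K k)"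
proof (rule extk[OF k u])
  have W: "W \<in> Obj C" using u homD by blast
  show "hom W (K k) (zer C W (K k))" using W bpk(1)[OF k] by blast
  show "p1 k \<cdot> u = p1 k \<cdot> zer C W (K k)" using assms comp_zer_r[OF bpk(4)[OF k] W] by simp
  show "p2 k \<cdot> u = p2 k \<cdot> zer C W (K k)" using assms comp_zer_r[OF bpk(5)[OF k] W] by simp
qed


lemma cone_cx: assumes k: "k < n" and g: "hom W (K k) g"
  shows "D (Suc k) \<cdot> (D k \<cdot> g) = zer C W (K (Suc (Suc k)))"
proof -
  have W: "W \<in> Obj C" using g homD by blast
  show ?thesis
  proof (cases "k = 0")
    case True
    have g0: "hom W (X 0) g" using g True K0 by simp
    have g0': "hom W (K 0) g" using g True by simp
    have dg: "hom W (K 1) (D 0 \<cdot> g)" using comp_hom[OF g0' D0_hom] by simp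
    have hd0: "hom (X 0) (X 1) (dX 0)" using dXh[of 0] by simp
    have hf0: "hom (X 0) (Y 0) (f 0)" using fh[of 0] by simp
    have hf1: "hom (X 1) (Y 1) (f 1)" using fh[of 1] n1 by simp
    have hy0: "hom (Y 0) (Y 1) (dY 0)" using dYh[of 0] n1 by simp
    have u: "hom W (Y 0) (f 0 \<cdot> g)" using comp_hom[OF g0 hf0] by simp
    have xx: "hom W (X 1) (dX 0 \<cdot> g)" using comp_hom[OF g0 hd0] by simp
    have comm: "f 1 \<cdot> (dX 0 \<cdot> g) = dY 0 \<cdot> (f 0 \<cdot> g)"
      using cc[OF g0 hd0 hf1 hf0 hy0] fc[of 0] n1 by simp
    have s2: "f 1 \<cdot> (p1 1 \<cdot> (D 0 \<cdot> g)) \<oplus> dY 0 \<cdot> (p2 1 \<cdot> (D 0 \<cdot> g)) = zer C W (Y 1)"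
      using E0[OF g0] nn_comp[OF xx hf1] comm neg_add_cancel[OF comp_hom[OF u hy0]] by simp
    show ?thesis
    proof (cases "n = 1")
      case n: True
      have "D (Suc k) \<cdot> (D k \<cdot> g) = f 1 \<cdot> (p1 1 \<cdot> (D 0 \<cdot> g)) \<oplus> dY 0 \<cdot> (p2 1 \<cdot> (D 0 \<cdot> g))"
        using En[of W "D 0 \<cdot> g"] dg True n by simp
      thus ?thesis using s2 True n KS by simp
    next
      case n: False
      hence n2: "1 < n" using n1 by simp
      have dg2: "hom W (K 2) (D 1 \<cdot> (D 0 \<cdot> g))" using comp_hom[OF dg Dm_pr(3)[of 1]] n2 by (simp add: numeral_2_eq_2)
      have hd1: "hom (X 1) (X 2) (dX 1)" using dXh[of 1] n2 by (simp add: numeral_2_eq_2)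
      have "p1 2 \<cdot> (D 1 \<cdot> (D 0 \<cdot> g)) = \<ominus>(dX 1 \<cdot> (\<ominus>(dX 0 \<cdot> g)))"
        using Em(1)[of 1 W "D 0 \<cdot> g"] n2 dg E0(1)[OF g0] by (simp add: numeral_2_eq_2)
      also have "\<dots> = dX 1 \<cdot> (dX 0 \<cdot> g)" using nn_comp[OF xx hd1] neg_neg[OF comp_hom[OF xx hd1]] by simp
      also have "\<dots> = zer C W (X 2)" using zc[OF g0 hd0 hd1] dXX[of 0] n2 by (simp add: numeral_2_eq_2)
      finally have c1: "p1 2 \<cdot> (D 1 \<cdot> (D 0 \<cdot> g)) = zer C W (X 2)" .
      have c2: "p2 2 \<cdot> (D 1 \<cdot> (D 0 \<cdot> g)) = zer C W (Y (2 - 1))"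
        using Em(2)[of 1 W "D 0 \<cdot> g"] n2 dg s2 by (simp add: numeral_2_eq_2)
      show ?thesis using zerk[of 2 W, OF _ _ dg2 c1 c2] n2 True by (simp add: numeral_2_eq_2)
    qed
  next
    case False
    hence k1: "1 \<le> k" by simp
    define a where "a = p1 k \<cdot> g"
    define b where "b = p2 k \<cdot> g"
    have a: "hom W (X k) a" using comp_hom[OF g bpk(4)[OF k1]] k a_def by simp
    have b: "hom W (Y (k - 1)) b" using comp_hom[OF g bpk(5)[OF k1]] k b_def by simp
    have hdk: "hom (X k) (X (Suc k)) (dX k)" using dXh[of k] k by simp
    have hdk1: "hom (X (Suc k)) (X (Suc (Suc k))) (dX (Suc k))" using dXh[of "Suc k"] k by simp
    have hfk: "hom (X k) (Y k) (f k)" using fh[of k] k by simp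
    have hfk1: "hom (X (Suc k)) (Y (Suc k)) (f (Suc k))" using fh[of "Suc k"] k by simp
    have hyk: "hom (Y k) (Y (Suc k)) (dY k)" using dYh[of k] k by simp
    have hyk0: "hom (Y (k - 1)) (Y k) (dY (k - 1))" using dYh[of "k - 1"] k k1 by simp
    have dg: "hom W (K (Suc k)) (D k \<cdot> g)" using comp_hom[OF g D_hom[of k]] k by simp
    have xx: "hom W (X (Suc k)) (dX k \<cdot> a)" using comp_hom[OF a hdk] by simp
    have fa: "hom W (Y k) (f k \<cdot> a)" using comp_hom[OF a hfk] by simp
    have yb: "hom W (Y k) (dY (k - 1) \<cdot> b)" using comp_hom[OF b hyk0] by simp
    have comm: "f (Suc k) \<cdot> (dX k \<cdot> a) = dY k \<cdot> (f k \<cdot> a)"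
      using cc[OF a hdk hfk1 hfk hyk] fc[of k] k by simp
    have yy: "dY k \<cdot> (dY (k - 1) \<cdot> b) = zer C W (Y (Suc k))"
      using zc[OF b hyk0 hyk] dYY[of "k - 1"] k k1 by simp
    have s2: "f (Suc k) \<cdot> (p1 (Suc k) \<cdot> (D k \<cdot> g)) \<oplus> dY k \<cdot> (p2 (Suc k) \<cdot> (D k \<cdot> g)) = zer C W (Y (Suc k))"
    proof -
      have "f (Suc k) \<cdot> (p1 (Suc k) \<cdot> (D k \<cdot> g)) \<oplus> dY k \<cdot> (p2 (Suc k) \<cdot> (D k \<cdot> g))
          = f (Suc k) \<cdot> (\<ominus>(dX k \<cdot> a)) \<oplus> dY k \<cdot> (f k \<cdot> a \<oplus> dY (k - 1) \<cdot> b)"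
        using Em[OF k1 k g] a_def b_def by simp
      also have "\<dots> = \<ominus>(dY k \<cdot> (f k \<cdot> a)) \<oplus> (dY k \<cdot> (f k \<cdot> a) \<oplus> zer C W (Y (Suc k)))"
        using nn_comp[OF xx hfk1] comm distl[OF fa yb hyk] yy by simp
      also have "\<dots> = zer C W (Y (Suc k))" using cancel3 comp_hom[OF fa hyk] by simp
      finally show ?thesis .
    qed
    show ?thesis
    proof (cases "Suc k = n")
      case True
      have "D (Suc k) \<cdot> (D k \<cdot> g) = f (Suc k) \<cdot> (p1 (Suc k) \<cdot> (D k \<cdot> g)) \<oplus> dY k \<cdot> (p2 (Suc k) \<cdot> (D k \<cdot> g))"
        using En[of W "D k \<cdot> g"] dg True[symmetric] by simp
      thus ?thesis using s2 True[symmetric] KS by simp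
    next
      case False
      hence k2: "Suc k < n" using k by simp
      have dg2: "hom W (K (Suc (Suc k))) (D (Suc k) \<cdot> (D k \<cdot> g))" using comp_hom[OF dg D_hom[of "Suc k"]] k2 by simp
      have "p1 (Suc (Suc k)) \<cdot> (D (Suc k) \<cdot> (D k \<cdot> g)) = \<ominus>(dX (Suc k) \<cdot> (\<ominus>(dX k \<cdot> a)))"
        using Em(1)[of "Suc k" W "D k \<cdot> g"] k2 dg Em(1)[OF k1 k g] a_def by simp
      also have "\<dots> = dX (Suc k) \<cdot> (dX k \<cdot> a)" using nn_comp[OF xx hdk1] neg_neg[OF comp_hom[OF xx hdk1]] by simp
      also have "\<dots> = zer C W (X (Suc (Suc k)))" using zc[OF a hdk hdk1] dXX[of k] k2 by simp
      finally have c1: "p1 (Suc (Suc k)) \<cdot> (D (Suc k) \<cdot> (D k \<cdot> g)) = zer C W (X (Suc (Suc k)))" .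
      have c2: "p2 (Suc (Suc k)) \<cdot> (D (Suc k) \<cdot> (D k \<cdot> g)) = zer C W (Y (Suc (Suc k) - 1))"
        using Em(2)[of "Suc k" W "D k \<cdot> g"] k2 dg s2 by simp
      show ?thesis using zerk[of "Suc (Suc k)" W, OF _ _ dg2 c1 c2] k2 by simp
    qed
  qed
qed

lemma cone_complex: "is_complex C (Suc n) K D"
  unfolding is_complex_def
proof (intro conjI allI impI)
  fix k assume "k \<le> Suc n" thus "K k \<in> Obj C" by (rule Ko)
next
  fix k assume "k < Suc n" thus "D k \<in> Hom C (K k) (K (Suc k))" using D_hom homD by auto
next
  fix k assume k: "Suc k < Suc n"
  have i: "hom (K k) (K k) (idm C (K k))" using Ko[of k] k by auto
  have "D (Suc k) \<cdot> (D k \<cdot> idm C (K k)) = zer C (K k) (K (Suc (Suc k)))" using cone_cx[OF _ i] k by simp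
  thus "D (Suc k) \<cdot> D k = zer C (K k) (K (Suc (Suc k)))" using id_r D_hom[of k] k by simp
qed


lemma D0_mono: assumes XL: "left_exact C (Suc n) X dX" shows "is_mono C (K 0) (K 1) (D 0)"
proof (rule mono_intro[OF D0_hom])
  fix W g assume g: "hom W (K 0) g" and z: "D 0 \<cdot> g = zer C W (K 1)"
  have W: "W \<in> Obj C" using g homD by blast
  have g0: "hom W (X 0) g" using g K0 by simp
  have hd0: "hom (X 0) (X 1) (dX 0)" using dXh[of 0] by simp
  have "\<ominus>(dX 0 \<cdot> g) = zer C W (X 1)"
    using E0(1)[OF g0] z comp_zer_r[OF bpk(4)[of 1] W] n1 by simp
  hence "dX 0 \<cdot> g = zer C W (X 1)" using neg_eq_zer comp_hom[OF g0 hd0] by blast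
  hence "g = zer C W (X 0)" using XL W g0 unfolding left_exact_def hom_def by auto
  thus "g = zer C W (K 0)" using K0 by simp
qed

lemma Dm_i2: assumes k: "1 \<le> k" "k < n" shows "D k \<cdot> i2 k = i2 (Suc k) \<cdot> dY (k - 1)"
proof -
  have k': "1 \<le> Suc k" "Suc k \<le> n" using k by auto
  have i: "hom (Y (k - 1)) (K k) (i2 k)" using bpk(3)[of k] k by simp
  have hy: "hom (Y (k - 1)) (Y k) (dY (k - 1))" using dYh[of "k - 1"] k by simp
  have hdk: "hom (X k) (X (Suc k)) (dX k)" using dXh[of k] k by simp
  have hfk: "hom (X k) (Y k) (f k)" using fh[of k] k by simp
  have Yk: "Y (k - 1) \<in> Obj C" using Yo k by simp
  note bb = bp[OF Xo[of k] Yo[of "k - 1"]]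
  note bb' = bp[OF Xo[of "Suc k"] Yo[of k]]
  have u: "hom (Y (k - 1)) (K (Suc k)) (D k \<cdot> i2 k)" using comp_hom[OF i D_hom[of k]] k by simp
  note b3 = bpk(3)[OF k', simplified] and b4 = bpk(4)[OF k', simplified] and b5 = bpk(5)[OF k', simplified]
  have v: "hom (Y (k - 1)) (K (Suc k)) (i2 (Suc k) \<cdot> dY (k - 1))" using comp_hom[OF hy b3] by simp
  show ?thesis
  proof (rule extk[OF k' u v])
    have "p1 (Suc k) \<cdot> (D k \<cdot> i2 k) = \<ominus>(dX k \<cdot> zer C (Y (k - 1)) (X k))"
      using Em(1)[OF k i] bb k by simp
    also have "\<dots> = zer C (Y (k - 1)) (X (Suc k))" using comp_zer_r[OF hdk Yk] neg_zer Yk Xo[of "Suc k"] k by simp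
    also have "\<dots> = p1 (Suc k) \<cdot> (i2 (Suc k) \<cdot> dY (k - 1))"
      using assoc[OF hy b3 b4] bb' comp_zer_l[OF hy Xo[of "Suc k"]] k by simp
    finally show "p1 (Suc k) \<cdot> (D k \<cdot> i2 k) = p1 (Suc k) \<cdot> (i2 (Suc k) \<cdot> dY (k - 1))" .
    have "p2 (Suc k) \<cdot> (D k \<cdot> i2 k) = f k \<cdot> zer C (Y (k - 1)) (X k) \<oplus> dY (k - 1) \<cdot> idm C (Y (k - 1))"
      using Em(2)[OF k i] bb k by simp
    also have "\<dots> = dY (k - 1)" using comp_zer_r[OF hfk Yk] id_r[OF hy] zer_add[OF hy] by simp
    also have "\<dots> = p2 (Suc k) \<cdot> (i2 (Suc k) \<cdot> dY (k - 1))"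
      using assoc[OF hy b3 b5] bb' id_l[OF hy] k by simp
    finally show "p2 (Suc k) \<cdot> (D k \<cdot> i2 k) = p2 (Suc k) \<cdot> (i2 (Suc k) \<cdot> dY (k - 1))" .
  qed
qed


lemma cone_left_exact:
  assumes XL: "left_exact C (Suc n) X dX"
    and m: "is_mono C (Y 0) (Y 1) (dY 0)"
    and YE: "\<And>j W g. 1 \<le> j \<Longrightarrow> j < n \<Longrightarrow> hom W (Y j) g \<Longrightarrow> dY j \<cdot> g = zer C W (Y (Suc j)) \<Longrightarrow>
               \<exists>h. hom W (Y (j - 1)) h \<and> g = dY (j - 1) \<cdot> h"
    and e: "hom (Y n) (X (Suc n)) e" "e \<cdot> f n = dX n" "e \<cdot> dY (n - 1) = zer C (Y (n - 1)) (X (Suc n))"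
  shows "left_exact C (Suc n) K D"
  unfolding left_exact_def
proof (intro conjI cone_complex ballI allI impI)
  fix W g assume W: "W \<in> Obj C" and g: "g \<in> Hom C W (K 0)" and z: "D 0 \<cdot> g = zer C W (K 1)"
  show "g = zer C W (K 0)" using mono_zero[OF D0_mono[OF XL] D0_hom _ z] W g Ko[of 0] homI by auto
next
  fix W k g assume W: "W \<in> Obj C" and k: "1 \<le> k \<and> k < Suc n" and g': "g \<in> Hom C W (K k)"
    and z: "D k \<cdot> g = zer C W (K (Suc k))"
  have k1: "1 \<le> k" "k \<le> n" using k by auto
  have g: "hom W (K k) g" using W g' Ko[of k] k homI by auto
  define a where "a = p1 k \<cdot> g"
  define b where "b = p2 k \<cdot> g"
  have a: "hom W (X k) a" using comp_hom[OF g bpk(4)[OF k1]] a_def by simp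
  have b: "hom W (Y (k - 1)) b" using comp_hom[OF g bpk(5)[OF k1]] b_def by simp
  have hdk: "hom (X k) (X (Suc k)) (dX k)" using dXh[of k] k by simp
  have hfk: "hom (X k) (Y k) (f k)" using fh[of k] k by simp
  have hyk0: "hom (Y (k - 1)) (Y k) (dY (k - 1))" using dYh[of "k - 1"] k1 n1 by simp
  have step1: "dX k \<cdot> a = zer C W (X (Suc k)) \<and> f k \<cdot> a \<oplus> dY (k - 1) \<cdot> b = zer C W (Y k)"
  proof (cases "k < n")
    case True
    have b1: "hom (K (Suc k)) (X (Suc k)) (p1 (Suc k))" "hom (K (Suc k)) (Y k) (p2 (Suc k))"
      using bpk(4,5)[of "Suc k"] True by auto
    have "\<ominus>(dX k \<cdot> a) = zer C W (X (Suc k))"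
      using Em(1)[OF k1(1) True g] z comp_zer_r[OF b1(1) W] a_def by simp
    hence "dX k \<cdot> a = zer C W (X (Suc k))" using neg_eq_zer comp_hom[OF a hdk] by blast
    moreover have "f k \<cdot> a \<oplus> dY (k - 1) \<cdot> b = zer C W (Y k)"
      using Em(2)[OF k1(1) True g] z comp_zer_r[OF b1(2) W] a_def b_def by simp
    ultimately show ?thesis by simp
  next
    case False
    hence kn: "k = n" using k by simp
    have s: "f k \<cdot> a \<oplus> dY (k - 1) \<cdot> b = zer C W (Y k)" using En[of W g] g z kn KS a_def b_def by simp
    have fa: "hom W (Y k) (f k \<cdot> a)" using comp_hom[OF a hfk] .
    have yb: "hom W (Y k) (dY (k - 1) \<cdot> b)" using comp_hom[OF b hyk0] .
    have ek: "hom (Y k) (X (Suc k)) e" using e kn by simp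
    have "zer C W (X (Suc k)) = e \<cdot> (f k \<cdot> a \<oplus> dY (k - 1) \<cdot> b)" using s comp_zer_r[OF ek W] by simp
    also have "\<dots> = e \<cdot> (f k \<cdot> a) \<oplus> e \<cdot> (dY (k - 1) \<cdot> b)" using distl[OF fa yb ek] .
    also have "\<dots> = dX k \<cdot> a \<oplus> zer C W (X (Suc k))"
      using assoc[OF a hfk ek] assoc[OF b hyk0 ek] e kn comp_zer_l[OF b Xo[of "Suc n"]] by simp
    also have "\<dots> = dX k \<cdot> a" using add_zer comp_hom[OF a hdk] by blast
    finally show ?thesis using s by simp
  qed
  have "\<exists>h\<in>Hom C W (X (k - 1)). a = dX (k - 1) \<cdot> h"
    using XL W a step1 k unfolding left_exact_def hom_def by blast
  then obtain a' where a'0: "a' \<in> Hom C W (X (k - 1))" and aa: "a = dX (k - 1) \<cdot> a'" by blast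
  have a': "hom W (X (k - 1)) a'" using a'0 W Xo[of "k - 1"] k1 by (simp add: hom_def)
  have hdk0: "hom (X (k - 1)) (X k) (dX (k - 1))" using dXh[of "k - 1"] k1 by simp
  have hfk0: "hom (X (k - 1)) (Y (k - 1)) (f (k - 1))" using fh[of "k - 1"] k1 by simp
  have fa': "hom W (Y (k - 1)) (f (k - 1) \<cdot> a')" using comp_hom[OF a' hfk0] .
  define c where "c = b \<oplus> f (k - 1) \<cdot> a'"
  have c: "hom W (Y (k - 1)) c" using c_def b fa' by auto
  have comm: "dY (k - 1) \<cdot> (f (k - 1) \<cdot> a') = f k \<cdot> a"
    using cc[OF a' hdk0 hfk hfk0 hyk0] fc[of "k - 1"] k1 aa by simp
  have dc: "dY (k - 1) \<cdot> c = zer C W (Y k)"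
    using distl[OF b fa' hyk0] comm step1 c_def add_comm[OF comp_hom[OF b hyk0] comp_hom[OF a hfk]] by simp
  have na: "hom W (X (k - 1)) (\<ominus> a')" using a' by auto
  have p1eq: "\<ominus>(dX (k - 1) \<cdot> (\<ominus> a')) = a"
    using nn_comp[OF a' hdk0] neg_neg[OF comp_hom[OF a' hdk0]] aa by simp
  show "\<exists>h\<in>Hom C W (K (k - 1)). g = D (k - 1) \<cdot> h"
  proof (cases "k = 1")
    case True
    have hy0: "hom (Y 0) (Y 1) (dY 0)" using dYh[of 0] n1 by simp
    have c0': "hom W (Y 0) c" using c True by simp
    have c0: "c = zer C W (Y 0)"
      using mono_zero[OF m hy0 c0'] dc True by simp
    have beq: "b = \<ominus>(f 0 \<cdot> a')" using G2[OF fa' b] c0 c_def True by simp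
    have na0: "hom W (X 0) (\<ominus> a')" using na True by simp
    have dh: "hom W (K 1) (D 0 \<cdot> (\<ominus> a'))" using comp_hom[OF na0[folded K0] D0_hom] .
    have "g = D 0 \<cdot> (\<ominus> a')"
    proof (rule extk[of 1 W])
      show "1 \<le> (1::nat)" "1 \<le> n" using n1 by auto
      show "hom W (K 1) g" using g True by simp
      show "hom W (K 1) (D 0 \<cdot> (\<ominus> a'))" using dh .
      show "p1 1 \<cdot> g = p1 1 \<cdot> (D 0 \<cdot> (\<ominus> a'))" using E0(1)[OF na0] p1eq a_def True by simp
      show "p2 1 \<cdot> g = p2 1 \<cdot> (D 0 \<cdot> (\<ominus> a'))" using E0(2)[OF na0] beq b_def True comp_neg[OF a' hfk0] by simp
    qed
    thus ?thesis using dh homD na0 True K0 by auto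
  next
    case False
    hence kk: "1 \<le> k - 1" "k - 1 < n" using k by auto
    obtain b' where b': "hom W (Y (k - 1 - 1)) b'" and cb: "c = dY (k - 1 - 1) \<cdot> b'"
      using YE[OF kk c] dc kk by auto
    define h where "h = i1 (k - 1) \<cdot> (\<ominus> a') \<oplus> i2 (k - 1) \<cdot> b'"
    note pk = pairk[OF kk(1) less_imp_le[OF kk(2)] na b']
    have hh: "hom W (K (k - 1)) h" using pk h_def by simp
    have sk: "Suc (k - 1 - 1) = k - 1" using kk by linarith
    have hyk1: "hom (Y (k - 1 - 1)) (Y (k - 1)) (dY (k - 1 - 1))" using dYh[of "k - 1 - 1"] kk sk by simp
    have "g = D (k - 1) \<cdot> h"
    proof (rule extk[OF k1 g])
      show "hom W (K k) (D (k - 1) \<cdot> h)" using comp_hom[OF hh D_hom[of "k - 1"]] kk by simp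
      show "p1 k \<cdot> g = p1 k \<cdot> (D (k - 1) \<cdot> h)"
        using Em(1)[OF kk hh] pk h_def p1eq a_def kk by simp
      have "p2 k \<cdot> (D (k - 1) \<cdot> h) = f (k - 1) \<cdot> (\<ominus> a') \<oplus> c"
        using Em(2)[OF kk hh] pk h_def cb kk by simp
      also have "\<dots> = b" using comp_neg[OF a' hfk0] G1[OF fa' b] c_def by simp
      finally show "p2 k \<cdot> g = p2 k \<cdot> (D (k - 1) \<cdot> h)" using b_def by simp
    qed
    thus ?thesis using hh homD by auto
  qed
qed


lemma XR_inj: assumes XR: "right_exact C (Suc n) X dX" and h: "hom (X (Suc n)) W h"
  and z: "h \<cdot> dX n = zer C (X n) W" shows "h = zer C (X (Suc n)) W"
  using XR h z homD unfolding right_exact_def hom_def by auto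

lemma XR_ex: assumes XR: "right_exact C (Suc n) X dX" and k: "1 \<le> k" "k \<le> n" and h: "hom (X k) W h"
  and z: "h \<cdot> dX (k - 1) = zer C (X (k - 1)) W" shows "\<exists>a. hom (X (Suc k)) W a \<and> h = a \<cdot> dX k"
proof -
  have W: "W \<in> Obj C" using h homD by blast
  have "\<exists>a\<in>Hom C (X (Suc k)) W. h = a \<cdot> dX k"
    using XR h z W k unfolding right_exact_def hom_def by auto
  thus ?thesis using W Xo[of "Suc k"] k unfolding hom_def by auto
qed

lemma Dn_epi:
  assumes XR: "right_exact C (Suc n) X dX"
    and e: "hom (Y n) (X (Suc n)) e" "e \<cdot> f n = dX n"
    and YR: "\<And>W g. hom (Y n) W g \<Longrightarrow> g \<cdot> dY (n - 1) = zer C (Y (n - 1)) W \<Longrightarrow>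
               \<exists>h. hom (X (Suc n)) W h \<and> g = h \<cdot> e"
  shows "is_epi C (K n) (K (Suc n)) (D n)"
proof (rule epi_intro[OF Dn_in(3)])
  fix W g assume g': "hom (K (Suc n)) W g" and z: "g \<cdot> D n = zer C (K n) W"
  have g: "hom (Y n) W g" using g' KS by simp
  have W: "W \<in> Obj C" using g homD by blast
  have i1: "hom (X n) (K n) (i1 n)" and i2: "hom (Y (n - 1)) (K n) (i2 n)" using bpk[OF n1 order.refl] by auto
  have "g \<cdot> f n = (g \<cdot> D n) \<cdot> i1 n" using assoc[OF i1 Dn_in(3) g'] Dn_in(1) by simp
  hence gf: "g \<cdot> f n = zer C (X n) W" using z comp_zer_l[OF i1 W] by simp
  have "g \<cdot> dY (n - 1) = (g \<cdot> D n) \<cdot> i2 n" using assoc[OF i2 Dn_in(3) g'] Dn_in(2) by simp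
  hence gd: "g \<cdot> dY (n - 1) = zer C (Y (n - 1)) W" using z comp_zer_l[OF i2 W] by simp
  obtain h where h: "hom (X (Suc n)) W h" and gh: "g = h \<cdot> e" using YR[OF g gd] by blast
  have "h \<cdot> dX n = zer C (X n) W" using assoc[OF fh[of n] e(1) h] e(2) gh gf by simp
  hence "h = zer C (X (Suc n)) W" using XR_inj[OF XR h] by simp
  thus "g = zer C (K (Suc n)) W" using gh comp_zer_l[OF e(1) W] KS by simp
qed


lemma R_inj: assumes R: "right_exact C (Suc n) K D" and u: "hom (K (Suc n)) W u"
  and z: "u \<cdot> D n = zer C (K n) W" shows "u = zer C (K (Suc n)) W"
  using R u z homD unfolding right_exact_def hom_def by auto

lemma R_ex: assumes R: "right_exact C (Suc n) K D" and k: "1 \<le> k" "k \<le> n" and u: "hom (K k) W u"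
  and z: "u \<cdot> D (k - 1) = zer C (K (k - 1)) W" shows "\<exists>h. hom (K (Suc k)) W h \<and> u = h \<cdot> D k"
proof -
  have W: "W \<in> Obj C" using u homD by blast
  have "\<exists>h\<in>Hom C (K (Suc k)) W. u = h \<cdot> D k"
    using R u z W k unfolding right_exact_def hom_def by auto
  thus ?thesis using W Ko[of "Suc k"] k unfolding hom_def by auto
qed

lemma e_exists: assumes R: "right_exact C (Suc n) K D"
  obtains e where "hom (Y n) (X (Suc n)) e" "e \<cdot> f n = dX n" "e \<cdot> dY (n - 1) = zer C (Y (n - 1)) (X (Suc n))"
proof -
  have p1: "hom (K n) (X n) (p1 n)" and i1: "hom (X n) (K n) (i1 n)" and i2: "hom (Y (n - 1)) (K n) (i2 n)"
    using bpk[OF n1 order.refl] by auto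
  have hdn: "hom (X n) (X (Suc n)) (dX n)" using dXh by simp
  have hdn0: "hom (X (n - 1)) (X n) (dX (n - 1))" using dXh[of "n - 1"] n1 by simp
  have XS: "X (Suc n) \<in> Obj C" using Xo by simp
  define g where "g = dX n \<cdot> p1 n"
  have g: "hom (K n) (X (Suc n)) g" using comp_hom[OF p1 hdn] g_def by simp
  have Dn1: "hom (K (n - 1)) (K n) (D (n - 1))" using D_hom[of "n - 1"] n1 by simp
  have Kn1: "K (n - 1) \<in> Obj C" using Ko[of "n - 1"] by simp
  have gz: "g \<cdot> D (n - 1) = zer C (K (n - 1)) (X (Suc n))"
  proof (cases "n = 1")
    case True
    have hd0: "hom (X 0) (X 1) (dX 0)" using dXh[of 0] by simp
    have hd1: "hom (X 1) (X (Suc 1)) (dX 1)" using hdn True by simp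
    have "g \<cdot> D (n - 1) = dX 1 \<cdot> (p1 1 \<cdot> D 0)" using assoc[OF Dn1 p1 hdn] g_def True by simp
    also have "\<dots> = \<ominus>(dX 1 \<cdot> dX 0)" using D0_pr(1) comp_neg[OF hd0 hd1] by simp
    also have "\<dots> = zer C (K (n - 1)) (X (Suc n))" using dXX[of 0] True neg_zer Xo K0 by simp
    finally show ?thesis .
  next
    case False
    hence k: "1 \<le> n - 1" "n - 1 < n" using n1 by auto
    have sn: "Suc (n - 1) = n" using n1 by simp
    have pk: "hom (K (n - 1)) (X (n - 1)) (p1 (n - 1))" using bpk(4)[OF k(1)] by simp
    have "g \<cdot> D (n - 1) = dX n \<cdot> (p1 n \<cdot> D (n - 1))" using assoc[OF Dn1 p1 hdn] g_def by simp
    also have "\<dots> = dX n \<cdot> ((\<ominus> dX (n - 1)) \<cdot> p1 (n - 1))" using Dm_pr(1)[OF k] sn by simp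
    also have "\<dots> = (dX n \<cdot> (\<ominus> dX (n - 1))) \<cdot> p1 (n - 1)" using assoc[OF pk neg_hom[OF hdn0] hdn] .
    also have "\<dots> = (\<ominus> (dX n \<cdot> dX (n - 1))) \<cdot> p1 (n - 1)" using comp_neg[OF hdn0 hdn] by simp
    also have "\<dots> = zer C (K (n - 1)) (X (Suc n))"
      using dXX[of "n - 1"] sn neg_zer Xo[of "n - 1"] XS comp_zer_l[OF pk XS] by simp
    finally show ?thesis .
  qed
  obtain h where h: "hom (K (Suc n)) (X (Suc n)) h" and gh: "g = h \<cdot> D n"
    using R_ex[OF R n1 order.refl g gz] by blast
  have h': "hom (Y n) (X (Suc n)) h" using h KS by simp
  have "h \<cdot> f n = (h \<cdot> D n) \<cdot> i1 n" using assoc[OF i1 Dn_in(3) h] Dn_in(1) by simp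
  also have "\<dots> = dX n \<cdot> (p1 n \<cdot> i1 n)" using gh g_def assoc[OF i1 p1 hdn] by simp
  also have "\<dots> = dX n" using bp[OF Xo[of n] Yo[of "n - 1"]] id_r[OF hdn] by simp
  finally have e1: "h \<cdot> f n = dX n" .
  have "h \<cdot> dY (n - 1) = (h \<cdot> D n) \<cdot> i2 n" using assoc[OF i2 Dn_in(3) h] Dn_in(2) by simp
  also have "\<dots> = dX n \<cdot> (p1 n \<cdot> i2 n)" using gh g_def assoc[OF i2 p1 hdn] by simp
  also have "\<dots> = zer C (Y (n - 1)) (X (Suc n))" using bp[OF Xo[of n] Yo[of "n - 1"]] comp_zer_r[OF hdn Yo[of "n - 1"]] by simp
  finally have e2: "h \<cdot> dY (n - 1) = zer C (Y (n - 1)) (X (Suc n))" .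
  show ?thesis using that h' e1 e2 by blast
qed


lemma Yp_right_exact:
  assumes R: "right_exact C (Suc n) K D" and XR: "right_exact C (Suc n) X dX"
    and e: "hom (Y n) (X (Suc n)) e" "e \<cdot> f n = dX n" "e \<cdot> dY (n - 1) = zer C (Y (n - 1)) (X (Suc n))"
  shows "right_exact C (Suc n) (Y(Suc n := X (Suc n))) (dY(n := e))"
  unfolding right_exact_def
proof (intro conjI ballI allI impI)
  show "is_complex C (Suc n) (Y(Suc n := X (Suc n))) (dY(n := e))"
    unfolding is_complex_def
  proof (intro conjI allI impI)
    fix k assume "k \<le> Suc n" thus "(Y(Suc n := X (Suc n))) k \<in> Obj C" using Yo Xo by auto
  next
    fix k assume k: "k < Suc n"
    show "(dY(n := e)) k \<in> Hom C ((Y(Suc n := X (Suc n))) k) ((Y(Suc n := X (Suc n))) (Suc k))"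
    proof (cases "k = n")
      case True thus ?thesis using e homD by auto
    next
      case False thus ?thesis using dYh[of k] k homD by auto
    qed
  next
    fix k assume k: "Suc k < Suc n"
    show "cmp C ((dY(n := e)) (Suc k)) ((dY(n := e)) k) = zer C ((Y(Suc n := X (Suc n))) k) ((Y(Suc n := X (Suc n))) (Suc (Suc k)))"
    proof (cases "Suc k = n")
      case True
      hence "k = n - 1" by simp
      thus ?thesis using e True by auto
    next
      case False thus ?thesis using dYY[of k] k by auto
    qed
  qed
next
  fix W assume W: "W \<in> Obj C"
  fix g assume g0: "g \<in> Hom C ((Y(Suc n := X (Suc n))) (Suc n)) W"
    and z0: "cmp C g ((dY(n := e)) (Suc n - 1)) = zer C ((Y(Suc n := X (Suc n))) (Suc n - 1)) W"
  have g: "hom (X (Suc n)) W g" using g0 W Xo by (simp add: hom_def)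
  have z: "g \<cdot> e = zer C (Y n) W" using z0 by simp
  have "g \<cdot> dX n = zer C (X n) W" using assoc[OF fh[of n] e(1) g] e(2) z comp_zer_l[OF fh[of n] W] by simp
  thus "g = zer C ((Y(Suc n := X (Suc n))) (Suc n)) W" using XR_inj[OF XR g] by simp
next
  fix W assume W: "W \<in> Obj C"
  fix k b assume k: "1 \<le> k \<and> k < Suc n" and b0: "b \<in> Hom C ((Y(Suc n := X (Suc n))) k) W"
    and z0: "cmp C b ((dY(n := e)) (k - 1)) = zer C ((Y(Suc n := X (Suc n))) (k - 1)) W"
  have k1: "1 \<le> k" "k \<le> n" using k by auto
  have b: "hom (Y k) W b" using b0 W Yo k1 by (simp add: hom_def)
  have ne: "k - 1 \<noteq> n" "k - 1 \<noteq> Suc n" using k1 by auto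
  have bz: "b \<cdot> dY (k - 1) = zer C (Y (k - 1)) W" using z0 ne by simp
  have hfk: "hom (X k) (Y k) (f k)" using fh k1 by simp
  have hfk0: "hom (X (k - 1)) (Y (k - 1)) (f (k - 1))" using fh[of "k - 1"] k1 by simp
  have hdk0: "hom (X (k - 1)) (X k) (dX (k - 1))" using dXh[of "k - 1"] k1 by simp
  have hdk: "hom (X k) (X (Suc k)) (dX k)" using dXh[of k] k1 by simp
  have hyk0: "hom (Y (k - 1)) (Y k) (dY (k - 1))" using dYh[of "k - 1"] k1 by simp
  have sk: "Suc (k - 1) = k" using k1 by simp
  have bf: "hom (X k) W (b \<cdot> f k)" using comp_hom[OF hfk b] .
  have "(b \<cdot> f k) \<cdot> dX (k - 1) = b \<cdot> (f k \<cdot> dX (k - 1))" using assoc[OF hdk0 hfk b] by simp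
  also have "\<dots> = b \<cdot> (dY (k - 1) \<cdot> f (k - 1))" using fc[of "k - 1"] k1 sk by simp
  also have "\<dots> = (b \<cdot> dY (k - 1)) \<cdot> f (k - 1)" using assoc[OF hfk0 hyk0 b] .
  also have "\<dots> = zer C (X (k - 1)) W" using bz comp_zer_l[OF hfk0 W] by simp
  finally have bfz: "(b \<cdot> f k) \<cdot> dX (k - 1) = zer C (X (k - 1)) W" .
  obtain a where a: "hom (X (Suc k)) W a" and ba: "b \<cdot> f k = a \<cdot> dX k"
    using XR_ex[OF XR k1 bf bfz] by blast
  show "\<exists>h\<in>Hom C ((Y(Suc n := X (Suc n))) (Suc k)) W. b = cmp C h ((dY(n := e)) k)"
  proof (cases "k < n")
    case True
    have k1': "1 \<le> Suc k" "Suc k \<le> n" using True by auto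
    note bb = bpk[OF k1', simplified]
    have pk: "hom (K k) (X k) (p1 k)" "hom (K k) (Y (k - 1)) (p2 k)" using bpk[OF k1] by auto
    define G where "G = a \<cdot> p1 (Suc k) \<oplus> b \<cdot> p2 (Suc k)"
    have G: "hom (K (Suc k)) W G" using G_def bb a b by auto
    have Dk: "hom (K k) (K (Suc k)) (D k)" using D_hom k1 by simp
    have ap: "hom (K (Suc k)) W (a \<cdot> p1 (Suc k))" "hom (K (Suc k)) W (b \<cdot> p2 (Suc k))" using bb a b by auto
    define x where "x = (a \<cdot> dX k) \<cdot> p1 k"
    have x: "hom (K k) W x" using x_def pk hdk a by auto
    have "G \<cdot> D k = (a \<cdot> p1 (Suc k)) \<cdot> D k \<oplus> (b \<cdot> p2 (Suc k)) \<cdot> D k"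
      using distr[OF Dk ap] G_def by simp
    also have "\<dots> = a \<cdot> (p1 (Suc k) \<cdot> D k) \<oplus> b \<cdot> (p2 (Suc k) \<cdot> D k)"
      using assoc[OF Dk bb(4) a] assoc[OF Dk bb(5) b] by simp
    also have "\<dots> = a \<cdot> ((\<ominus> dX k) \<cdot> p1 k) \<oplus> b \<cdot> (f k \<cdot> p1 k \<oplus> dY (k - 1) \<cdot> p2 k)"
      using Dm_pr[OF k1(1) True] by simp
    also have "\<dots> = (a \<cdot> (\<ominus> dX k)) \<cdot> p1 k \<oplus> ((b \<cdot> f k) \<cdot> p1 k \<oplus> (b \<cdot> dY (k - 1)) \<cdot> p2 k)"
      using assoc[OF pk(1) neg_hom[OF hdk] a] distl[OF comp_hom[OF pk(1) hfk] comp_hom[OF pk(2) hyk0] b]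
        assoc[OF pk(1) hfk b] assoc[OF pk(2) hyk0 b] by simp
    also have "\<dots> = \<ominus> x \<oplus> (x \<oplus> zer C (K k) W)"
      using comp_neg[OF hdk a] neg_comp[OF pk(1) comp_hom[OF hdk a]] x_def ba bz comp_zer_l[OF pk(2) W] by simp
    also have "\<dots> = zer C (K k) W" using cancel3[OF x] .
    finally have Gz: "G \<cdot> D (Suc k - 1) = zer C (K (Suc k - 1)) W" by simp
    obtain h where h: "hom (K (Suc (Suc k))) W h" and Gh: "G = h \<cdot> D (Suc k)"
      using R_ex[OF R k1' G Gz] by blast
    have i2: "hom (Y k) (K (Suc k)) (i2 (Suc k))" using bb by simp
    have DS: "hom (K (Suc k)) (K (Suc (Suc k))) (D (Suc k))" using D_hom k1' by simp
    have "b = G \<cdot> i2 (Suc k)" using copair_in(2)[OF Xo[of "Suc k"] Yo[of k] a b] G_def k1' by simp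
    hence bh: "b = h \<cdot> (D (Suc k) \<cdot> i2 (Suc k))" using Gh assoc[OF i2 DS h] by simp
    show ?thesis
    proof (cases "Suc k = n")
      case True
      have "b = h \<cdot> dY k" using bh Dn_in(2) True[symmetric] by simp
      moreover have "h \<in> Hom C ((Y(Suc n := X (Suc n))) (Suc k)) W" using h True[symmetric] KS homD by simp
      ultimately show ?thesis using True by auto
    next
      case False
      hence k2: "1 \<le> Suc k" "Suc k < n" using True by auto
      have i2': "hom (Y (Suc k)) (K (Suc (Suc k))) (i2 (Suc (Suc k)))" using bpk(3)[of "Suc (Suc k)"] k2 by simp
      have "b = h \<cdot> (i2 (Suc (Suc k)) \<cdot> dY k)" using bh Dm_i2[OF k2] by simp
      hence "b = (h \<cdot> i2 (Suc (Suc k))) \<cdot> dY k" using assoc[OF dYh[of k] i2' h] True by simp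
      moreover have "h \<cdot> i2 (Suc (Suc k)) \<in> Hom C ((Y(Suc n := X (Suc n))) (Suc k)) W"
        using comp_hom[OF i2' h] homD True by simp
      ultimately show ?thesis using True by auto
    qed
  next
    case False
    hence kn: "k = n" using k1 by simp
    define u where "u = b \<oplus> \<ominus>(a \<cdot> e)"
    have ae: "hom (Y n) W (a \<cdot> e)" using comp_hom[OF e(1)] a kn by simp
    have bn: "hom (Y n) W b" using b kn by simp
    have u: "hom (Y n) W u" using u_def ae bn by auto
    have pn: "hom (K n) (X n) (p1 n)" "hom (K n) (Y (n - 1)) (p2 n)" using bpk[OF n1 order.refl] by auto
    have hfn: "hom (X n) (Y n) (f n)" using fh by simp
    have hyn: "hom (Y (n - 1)) (Y n) (dY (n - 1))" using dYh[of "n - 1"] n1 by simp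
    have uf: "u \<cdot> f n = zer C (X n) W"
    proof -
      have "u \<cdot> f n = b \<cdot> f n \<oplus> \<ominus>((a \<cdot> e) \<cdot> f n)"
        using distr[OF hfn bn neg_hom[OF ae]] neg_comp[OF hfn ae] u_def by simp
      also have "\<dots> = a \<cdot> dX n \<oplus> \<ominus>(a \<cdot> dX n)"
        using ba kn assoc[OF hfn e(1)] a e(2) by simp
      also have "\<dots> = zer C (X n) W" using add_neg[OF comp_hom[OF dXh[of n]]] a kn by simp
      finally show ?thesis .
    qed
    have ud: "u \<cdot> dY (n - 1) = zer C (Y (n - 1)) W"
    proof -
      have "u \<cdot> dY (n - 1) = b \<cdot> dY (n - 1) \<oplus> \<ominus>((a \<cdot> e) \<cdot> dY (n - 1))"
        using distr[OF hyn bn neg_hom[OF ae]] neg_comp[OF hyn ae] u_def by simp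
      also have "\<dots> = zer C (Y (n - 1)) W \<oplus> \<ominus>(a \<cdot> zer C (Y (n - 1)) (X (Suc n)))"
        using bz kn assoc[OF hyn e(1)] a e(3) by simp
      also have "\<dots> = zer C (Y (n - 1)) W"
        using comp_zer_r[OF a Yo[of "n - 1"]] neg_zer[OF Yo[of "n - 1"] W] add_zer[OF zer_hom[OF Yo[of "n - 1"] W]] kn by simp
      finally show ?thesis .
    qed
    have u': "hom (K (Suc n)) W u" using u KS by simp
    have "u \<cdot> D n = u \<cdot> (f n \<cdot> p1 n) \<oplus> u \<cdot> (dY (n - 1) \<cdot> p2 n)"
      using Dn distl[OF comp_hom[OF pn(1) hfn] comp_hom[OF pn(2) hyn] u] by simp
    also have "\<dots> = (u \<cdot> f n) \<cdot> p1 n \<oplus> (u \<cdot> dY (n - 1)) \<cdot> p2 n"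
      using assoc[OF pn(1) hfn u] assoc[OF pn(2) hyn u] by simp
    also have "\<dots> = zer C (K n) W"
      using uf ud comp_zer_l[OF pn(1) W] comp_zer_l[OF pn(2) W] add_zer[OF zer_hom[OF Ko[of n] W]] by simp
    finally have "u = zer C (K (Suc n)) W" using R_inj[OF R u'] by simp
    hence "b = a \<cdot> e" using eq_of_diff[OF bn ae] u_def KS by simp
    moreover have "a \<in> Hom C ((Y(Suc n := X (Suc n))) (Suc k)) W" using a kn homD by simp
    ultimately show ?thesis using kn by auto
  qed
qed

end


theorem mainTheorem12:
  fixes C :: "('o, 'm) addcat" and n :: nat
    and X Y :: "nat \<Rightarrow> 'o" and dX dY f :: "nat \<Rightarrow> 'm"
  assumes "1 \<le> n"
    and "n_abelian C n"
    and "n_exact C n X dX"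
    and "is_complex C n Y dY"
    and "is_mono C (Y 0) (Y 1) (dY 0)"
    and "is_complex_morphism C n X dX Y dY f"
  shows "(n_pushout C n X dX Y dY f \<longleftrightarrow> n_exact C n (cone_obj C n X Y) (cone_diff C n X dX Y dY f)) \<and>
         (n_exact C n (cone_obj C n X Y) (cone_diff C n X dX Y dY f) \<longleftrightarrow>
            n_pushout C n X dX Y dY f \<and> n_pullback C n X dX Y dY f) \<and>
         (n_pushout C n X dX Y dY f \<and> n_pullback C n X dX Y dY f \<longleftrightarrow>
            (\<exists>e\<in>Hom C (Y n) (X (Suc n)). cmp C e (f n) = dX n \<and>
               n_exact C n (Y(Suc n := X (Suc n))) (dY(n := e))))"
proof -
  note ab = assms(2)[unfolded n_abelian_def]
  have XL: "left_exact C (Suc n) X dX" and XR: "right_exact C (Suc n) X dX"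
    using assms(3) unfolding n_exact_def left_n_exact_def right_n_exact_def by auto
  interpret cone C n X Y dX dY f
    apply unfold_locales
    using ab assms XL unfolding left_exact_def by auto
  let ?K = "cone_obj C n X Y" and ?D = "cone_diff C n X dX Y dY f"
  have PN: "n_exact C n ?K ?D" if P: "n_pushout C n X dX Y dY f"
  proof -
    have "is_n_cokernel C n (?K 0) (?K 1) (?D 0) ?K ?D"
      using P unfolding is_n_cokernel_def n_pushout_def by simp
    moreover have "?K 0 \<in> Obj C" "?K 1 \<in> Obj C" using Ko[of 0] Ko[of 1] by auto
    ultimately show ?thesis using ab D0_mono[OF XL] by blast
  qed
  have c2: "n_exact C n ?K ?D \<longleftrightarrow> n_pushout C n X dX Y dY f \<and> n_pullback C n X dX Y dY f"
    unfolding n_exact_def n_pushout_def n_pullback_def by auto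
  have c3a: "\<exists>e\<in>Hom C (Y n) (X (Suc n)). cmp C e (f n) = dX n \<and> n_exact C n (Y(Suc n := X (Suc n))) (dY(n := e))"
    if P: "n_pushout C n X dX Y dY f"
  proof -
    have R: "right_exact C (Suc n) ?K ?D" using P unfolding n_pushout_def right_n_exact_def by simp
    obtain e where e: "hom (Y n) (X (Suc n)) e" "e \<cdot> f n = dX n" "e \<cdot> dY (n - 1) = zer C (Y (n - 1)) (X (Suc n))"
      using e_exists[OF R] by blast
    have YR: "right_exact C (Suc n) (Y(Suc n := X (Suc n))) (dY(n := e))"
      using Yp_right_exact[OF R XR e] .
    have "is_n_cokernel C n (Y 0) (Y 1) (dY 0) (Y(Suc n := X (Suc n))) (dY(n := e))"
      using YR n1 unfolding is_n_cokernel_def right_n_exact_def by auto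
    moreover have "Y 0 \<in> Obj C" "Y 1 \<in> Obj C" using Yo[of 0] Yo[of 1] n1 by auto
    ultimately have "n_exact C n (Y(Suc n := X (Suc n))) (dY(n := e))"
      using ab assms(5) by blast
    thus ?thesis using e homD by blast
  qed
  have c3b: "n_pushout C n X dX Y dY f \<and> n_pullback C n X dX Y dY f"
    if ex: "\<exists>e\<in>Hom C (Y n) (X (Suc n)). cmp C e (f n) = dX n \<and> n_exact C n (Y(Suc n := X (Suc n))) (dY(n := e))"
  proof -
    obtain e where e0: "e \<in> Hom C (Y n) (X (Suc n))" and ef: "e \<cdot> f n = dX n"
      and ne: "n_exact C n (Y(Suc n := X (Suc n))) (dY(n := e))" using ex by blast
    have e: "hom (Y n) (X (Suc n)) e" using e0 Yo Xo homI by auto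
    have YL: "left_exact C (Suc n) (Y(Suc n := X (Suc n))) (dY(n := e))"
      and YRx: "right_exact C (Suc n) (Y(Suc n := X (Suc n))) (dY(n := e))"
      using ne unfolding n_exact_def left_n_exact_def right_n_exact_def by auto
    have ed: "e \<cdot> dY (n - 1) = zer C (Y (n - 1)) (X (Suc n))"
    proof -
      have "Suc (n - 1) < Suc n" using n1 by simp
      hence "cmp C ((dY(n := e)) (Suc (n - 1))) ((dY(n := e)) (n - 1))
          = zer C ((Y(Suc n := X (Suc n))) (n - 1)) ((Y(Suc n := X (Suc n))) (Suc (Suc (n - 1))))"
        using YL unfolding left_exact_def is_complex_def by blast
      moreover have "n - 1 \<noteq> n" "n - 1 \<noteq> Suc n" using n1 by auto
      ultimately show ?thesis using n1 by simp
    qed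
    have YE: "\<exists>h. hom W (Y (j - 1)) h \<and> g = dY (j - 1) \<cdot> h"
      if j: "1 \<le> j" "j < n" and g: "hom W (Y j) g" and z: "dY j \<cdot> g = zer C W (Y (Suc j))" for j W g
    proof -
      have W: "W \<in> Obj C" using g homD by blast
      have "\<exists>h\<in>Hom C W ((Y(Suc n := X (Suc n))) (j - 1)). g = cmp C ((dY(n := e)) (j - 1)) h"
        using YL W g z j unfolding left_exact_def hom_def by auto
      moreover have "j - 1 \<noteq> n" "j - 1 \<noteq> Suc n" "Y (j - 1) \<in> Obj C" using j Yo[of "j - 1"] by auto
      ultimately show ?thesis using W unfolding hom_def by auto
    qed
    have Q: "left_exact C (Suc n) ?K ?D"
      using cone_left_exact[OF XL assms(5) YE e ef ed] by blast
    have YR: "\<exists>h. hom (X (Suc n)) W h \<and> g = h \<cdot> e"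
      if g: "hom (Y n) W g" and z: "g \<cdot> dY (n - 1) = zer C (Y (n - 1)) W" for W g
    proof -
      have W: "W \<in> Obj C" using g homD by blast
      have ne: "n - 1 \<noteq> n" "n - 1 \<noteq> Suc n" using n1 by auto
      have gg: "g \<in> Hom C ((Y(Suc n := X (Suc n))) n) W" using g homD by simp
      have zz: "cmp C g ((dY(n := e)) (n - 1)) = zer C ((Y(Suc n := X (Suc n))) (n - 1)) W" using z ne by simp
      have "\<forall>k. 1 \<le> k \<and> k < Suc n \<longrightarrow> (\<forall>g\<in>Hom C ((Y(Suc n := X (Suc n))) k) W.
              cmp C g ((dY(n := e)) (k - 1)) = zer C ((Y(Suc n := X (Suc n))) (k - 1)) W \<longrightarrow>
              (\<exists>h\<in>Hom C ((Y(Suc n := X (Suc n))) (Suc k)) W. g = cmp C h ((dY(n := e)) k)))"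
        using YRx W unfolding right_exact_def by blast
      hence "\<exists>h\<in>Hom C ((Y(Suc n := X (Suc n))) (Suc n)) W. g = cmp C h ((dY(n := e)) n)"
        using gg zz n1 by blast
      thus ?thesis using W Xo[of "Suc n"] unfolding hom_def by auto
    qed
    have epi: "is_epi C (?K n) (?K (Suc n)) (?D n)" using Dn_epi[OF XR e ef YR] by blast
    have "is_n_kernel C n (?K n) (?K (Suc n)) (?D n) ?K ?D"
      using Q unfolding is_n_kernel_def left_n_exact_def by simp
    moreover have "?K n \<in> Obj C" "?K (Suc n) \<in> Obj C" using Ko[of n] Ko[of "Suc n"] by auto
    ultimately have "n_exact C n ?K ?D" using ab epi by blast
    thus ?thesis using c2 by blast
  qed
  show ?thesis using PN c2 c3a c3b
    unfolding n_exact_def n_pushout_def n_pullback_def by blast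
qed

end
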